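(* Let $(X,M)$ be an intrinsic Möbius space and let $d$ be a (possibly extended) quasi-metric on $X$ that induces $M$. Let $d'$ be either a rescaling $d'=\lambda d$ ($\lambda>0$) of $d$ or the involution $d'=d_o$ of $d$ at a point $o\in X$ which is not the point at infinity of $d$. Then $\dim_{Haus}(X,d)=\dim_{Haus}(X,d')$. In particular, setting $\dim_{Haus}(X,M):=\dim_{Haus}(X,d)$ for any quasi-metric $d$ inducing $M$ gives a well-defined quantity, and if $f:(X,M)\to(X',M')$ is a Möbius equivalence between intrinsic Möbius spaces, then $\dim_{Haus}(X,M)=\dim_{Haus}(X',M')$.
   Context: Let $X$ be a set with at least three points. A semi-metric is a symmetric map $d:X\times X\to[0,\infty)$ with $d(x,y)=0\iff x=y$. An extended semi-metric is a map $d:X\times X\to[0,\infty]$, symmetric with $d(x,y)=0\iff x=y$, for which there is exactly one point $\infty\in X$ (the point at infinity) with $d(x,\infty)=\infty$ for $x\neq\infty$ and $d(x,y)<\infty$ for $x,y\neq\infty$. For $K\ge1$, a (possibly extended) $K$-quasi-metric is a (possibly extended) semi-metric with $d(x,y)\le K\max(d(x,z),d(z,y))$ for all $x,y,z$; a quasi-metric is a $K$-quasi-metric for some $K$. Admissible quadruples $\mathcal A_4$: quadruples in $X^4$ in which no point appears more than twice; non-degenerate means all entries distinct. Let $\overline\Delta=\{(a:b:c)\in\mathbb RP^2: a,b,c>0\}\cup\{(1:1:0),(1:0:1),(0:1:1)\}$. The cross-ratio triple of $d$ is $crt_d(wxyz)=(d(w,x)d(y,z):d(w,y)d(z,x):d(w,z)d(x,y))$,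 where infinite distances cancel: $crt_d(\infty xyz)=(d(y,z):d(z,x):d(x,y))$, $crt_d(\infty\infty yz)=(0:1:1)$, and analogously for permutations. Let $L_4=\{(x,y,z)\in\mathbb R^3:x+y+z=0\}$, $\overline{L_4}=L_4\cup\{(0,\infty,-\infty),(-\infty,0,\infty),(\infty,-\infty,0)\}$, and $\overline\Phi:\overline\Delta\to\overline{L_4}$, $(a:b:c)\mapsto(\ln(b/c),\ln(c/a),\ln(a/b))$, extended by $(1:1:0)\mapsto(\infty,-\infty,0)$, $(1:0:1)\mapsto(-\infty,0,\infty)$, $(0:1:1)\mapsto(0,\infty,-\infty)$. Let $\varphi:\mathcal S_4\to\mathcal S_3$ be the homomorphism given by the induced permutation of the triple $((12)(34),(13)(42),(14)(23))$; $\mathcal S_3$ acts on $\overline{L_4}$ by permuting coordinates. A generalized Möbius structure is a map $M:\mathcal A_4\to\overline{L_4}$ such that: (1) $M(\pi P)=\mathrm{sgn}(\pi)\varphi(\pi)M(P)$ for all $P\in\mathcal A_4$, $\pi\in\mathcal S_4$; (2) $M(P)\in L_4$ iff $P$ is non-degenerate; (3) $M(xxyz)=(0,\infty,-\infty)$; (4) for every admissible 5-tuple $(x,y,\omega,\alpha,\beta)$ with $(\omega,\alpha,\beta)$ non-degenerate, $\alpha\ne x\ne\beta$, $\alpha\ne y\ne\beta$, there is $\lambda\in\mathbb R\cup\{\pm\infty\}$ with $M(\alpha x\omega\beta)+M(\alpha\omega y\beta)-M(\alpha xy\beta)=(\lambda,-\lambda,0)$; moreover the first component of the left side is well defined when $x\neq\beta$,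 $y\ne\alpha$, and the second when $x\ne\alpha$, $y\ne\beta$. Write $crt=\overline\Phi^{-1}\circ M$. A semi-metric $d$ induces $M$ if $crt=crt_d$. $M$ is intrinsic (and $(X,M)$ an intrinsic Möbius space) if moreover the closure of the image of $crt$ in $\mathbb RP^2$ contains none of $(1:0:0),(0:1:0),(0:0:1)$. A Möbius equivalence $f:(X,M)\to(X',M')$ is a bijection with $M'(f(w)f(x)f(y)f(z))=M(wxyz)$ for all admissible quadruples. Involution: for a (possibly extended) quasi-metric $d$ and $o\in X$ other than the point at infinity, $d_o(x,x)=0$, $d_o(x,y)=\frac{d(x,y)}{d(x,o)d(o,y)}$ for distinct $x,y\ne\infty$, $d_o(\infty,y)=1/d(o,y)$ and $d_o(x,\infty)=1/d(x,o)$ for the respective distinct points, with the convention $\lambda/0=\infty$ for $\lambda>0$. Hausdorff dimension of a (possibly extended) quasi-metric space $(X,d)$: $B_r(x)=\{y:d(x,y)\le r\}$; a $\delta$-cover of a set is a cover by closed balls $B_{r_i}(x_i)$ with $r_i\le\delta$. For $A\subseteq X$, $s\ge0$: $\mu^s_{\delta,d}(A)=\inf\{\sum_i r_i^s:\{B_{r_i}(x_i)\}\text{ a }\delta\text{-cover of }A\setminus\{\infty\}\}$, $\mu^s_d(A)=\lim_{\delta\to0}\mu^s_{\delta,d}(A)$, and $\dim_{Haus}(X,d)=\inf\{s\in\mathbb R:\mu^s_d(X)=0\}$. *)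

theory Defs
  imports "HOL-Analysis.Analysis" "HOL-Combinatorics.Permutations"
begin

type_synonym 'a quad = "'a \<times> 'a \<times> 'a \<times> 'a"
type_synonym triple = "ereal \<times> ereal \<times> ereal"

definition qlist :: "'a quad \<Rightarrow> 'a list" where
  "qlist P = (case P of (w,x,y,z) \<Rightarrow> [w,x,y,z])"

definition admissible :: "'a quad \<Rightarrow> bool" where
  "admissible P \<longleftrightarrow> (\<forall>p. count_list (qlist P) p \<le> 2)"

definition nondegenerate :: "'a quad \<Rightarrow> bool" where
  "nondegenerate P \<longleftrightarrow> distinct (qlist P)"

definition permq :: "(nat \<Rightarrow> nat) \<Rightarrow> 'a quad \<Rightarrow> 'a quad" where
  "permq \<pi> P = (qlist P ! \<pi> 0, qlist P ! \<pi> 1, qlist P ! \<pi> 2, qlist P ! \<pi> 3)"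

text \<open>The three pairings (12)(34), (13)(42), (14)(23), with positions numbered 0..3.\<close>
definition pairing :: "nat \<Rightarrow> nat set set" where
  "pairing k = (if k = 1 then {{0,1},{2,3}} else if k = 2 then {{0,2},{3,1}} else {{0,3},{1,2}})"

definition phi_perm :: "(nat \<Rightarrow> nat) \<Rightarrow> nat \<Rightarrow> nat" where
  "phi_perm \<pi> k = (THE j. j \<in> {1,2,3} \<and> (\<lambda>e. \<pi> ` e) ` pairing k = pairing j)"

definition comp :: "nat \<Rightarrow> 'b \<times> 'b \<times> 'b \<Rightarrow> 'b" where
  "comp k t = (case t of (a,b,c) \<Rightarrow> if k = 1 then a else if k = 2 then b else c)"

definition L4 :: "triple set" where
  "L4 = {(ereal u, ereal v, ereal w) | u v w. u + v + w = 0}"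

definition L4bar :: "triple set" where
  "L4bar = L4 \<union> {(0, \<infinity>, -\<infinity>), (-\<infinity>, 0, \<infinity>), (\<infinity>, -\<infinity>, 0)}"

text \<open>The map Phi-bar from (representatives of) points of Delta-bar to L4bar.\<close>
definition Phibar :: "real \<times> real \<times> real \<Rightarrow> triple" where
  "Phibar t = (case t of (a,b,c) \<Rightarrow>
     if a > 0 \<and> b > 0 \<and> c > 0 then (ereal (ln (b/c)), ereal (ln (c/a)), ereal (ln (a/b)))
     else if c = 0 then (\<infinity>, -\<infinity>, 0)
     else if b = 0 then (-\<infinity>, 0, \<infinity>)
     else (0, \<infinity>, -\<infinity>))"

text \<open>Inverse of Phi-bar, with values the representative in Delta-bar normalised by a+b+c=1.\<close>
definition Phibar_inv :: "triple \<Rightarrow> real \<times> real \<times> real" where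
  "Phibar_inv t = (case t of (u,v,w) \<Rightarrow>
     if t \<in> L4 then
       (let a = 1; b = exp (- real_of_ereal w); c = exp (real_of_ereal v); s = a + b + c
        in (a/s, b/s, c/s))
     else if t = (\<infinity>, -\<infinity>, 0) then (1/2, 1/2, 0)
     else if t = (-\<infinity>, 0, \<infinity>) then (1/2, 0, 1/2)
     else (0, 1/2, 1/2))"

definition wd3 :: "ereal \<Rightarrow> ereal \<Rightarrow> ereal \<Rightarrow> bool" where
  "wd3 a b c \<longleftrightarrow> \<not> (\<infinity> \<in> {a, b, -c} \<and> -\<infinity> \<in> {a, b, -c})"

definition moebius_axiom4 :: "('a quad \<Rightarrow> triple) \<Rightarrow> bool" where
  "moebius_axiom4 M \<longleftrightarrow>
    (\<forall>x y \<omega> \<alpha> \<beta>. (\<forall>p. count_list [x, y, \<omega>, \<alpha>, \<beta>] p \<le> 2) \<and> distinct [\<omega>, \<alpha>, \<beta>]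
        \<and> \<alpha> \<noteq> x \<and> x \<noteq> \<beta> \<and> \<alpha> \<noteq> y \<and> y \<noteq> \<beta> \<longrightarrow>
      (let t1 = M (\<alpha>, x, \<omega>, \<beta>); t2 = M (\<alpha>, \<omega>, y, \<beta>); t3 = M (\<alpha>, x, y, \<beta>);
           W = (\<lambda>k. wd3 (comp k t1) (comp k t2) (comp k t3));
           S = (\<lambda>k. comp k t1 + comp k t2 + - comp k t3)
       in (x \<noteq> \<beta> \<and> y \<noteq> \<alpha> \<longrightarrow> W 1) \<and> (x \<noteq> \<alpha> \<and> y \<noteq> \<beta> \<longrightarrow> W 2) \<and>
          (\<exists>l::ereal. (W 1 \<longrightarrow> S 1 = l) \<and> (W 2 \<longrightarrow> S 2 = - l) \<and> (W 3 \<longrightarrow> S 3 = 0))))"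

definition gen_moebius :: "('a quad \<Rightarrow> triple) \<Rightarrow> bool" where
  "gen_moebius M \<longleftrightarrow>
     (\<forall>P. admissible P \<longrightarrow> M P \<in> L4bar) \<and>
     (\<forall>P \<pi> k. admissible P \<and> \<pi> permutes {0..3::nat} \<and> k \<in> {1,2,3} \<longrightarrow>
        comp k (M (permq \<pi> P)) = ereal (real_of_int (sign \<pi>)) * comp (phi_perm \<pi> k) (M P)) \<and>
     (\<forall>P. admissible P \<longrightarrow> (M P \<in> L4 \<longleftrightarrow> nondegenerate P)) \<and>
     (\<forall>x y z. admissible (x, x, y, z) \<longrightarrow> M (x, x, y, z) = (0, \<infinity>, -\<infinity>)) \<and>
     moebius_axiom4 M"

text \<open>crt = Phibar^-1 o M, as normalised representatives; closure taken in the simplex chart.\<close>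
definition intrinsic :: "('a quad \<Rightarrow> triple) \<Rightarrow> bool" where
  "intrinsic M \<longleftrightarrow>
     (let R = Phibar_inv ` (M ` {P. admissible P})
      in (1,0,0) \<notin> closure R \<and> (0,1,0) \<notin> closure R \<and> (0,0,1) \<notin> closure R)"

definition moebius_space :: "('a quad \<Rightarrow> triple) \<Rightarrow> bool" where
  "moebius_space M \<longleftrightarrow> gen_moebius M \<and> intrinsic M"

definition map_quad :: "('a \<Rightarrow> 'b) \<Rightarrow> 'a quad \<Rightarrow> 'b quad" where
  "map_quad f P = (case P of (w,x,y,z) \<Rightarrow> (f w, f x, f y, f z))"

definition moebius_equiv :: "('a \<Rightarrow> 'b) \<Rightarrow> ('a quad \<Rightarrow> triple) \<Rightarrow> ('b quad \<Rightarrow> triple) \<Rightarrow> bool" where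
  "moebius_equiv f M M' \<longleftrightarrow> bij f \<and> (\<forall>P. admissible P \<longrightarrow> M' (map_quad f P) = M P)"

definition semi_metric :: "('a \<Rightarrow> 'a \<Rightarrow> ennreal) \<Rightarrow> bool" where
  "semi_metric d \<longleftrightarrow> (\<forall>x y. d x y = d y x) \<and> (\<forall>x y. d x y = 0 \<longleftrightarrow> x = y) \<and> (\<forall>x y. d x y \<noteq> \<infinity>)"

definition ext_semi_metric :: "('a \<Rightarrow> 'a \<Rightarrow> ennreal) \<Rightarrow> bool" where
  "ext_semi_metric d \<longleftrightarrow> (\<forall>x y. d x y = d y x) \<and> (\<forall>x y. d x y = 0 \<longleftrightarrow> x = y) \<and>
     (\<exists>!p. (\<forall>x. x \<noteq> p \<longrightarrow> d x p = \<infinity>) \<and> (\<forall>x y. x \<noteq> p \<longrightarrow> y \<noteq> p \<longrightarrow> d x y \<noteq> \<infinity>))"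

definition quasi_metric :: "('a \<Rightarrow> 'a \<Rightarrow> ennreal) \<Rightarrow> bool" where
  "quasi_metric d \<longleftrightarrow> (semi_metric d \<or> ext_semi_metric d) \<and>
     (\<exists>K::real. K \<ge> 1 \<and> (\<forall>x y z. d x y \<le> ennreal K * max (d x z) (d z y)))"

text \<open>The point at infinity (empty set if d is not extended).\<close>
definition infpts :: "('a \<Rightarrow> 'a \<Rightarrow> ennreal) \<Rightarrow> 'a set" where
  "infpts d = {p. \<forall>x. x \<noteq> p \<longrightarrow> d x p = \<infinity>}"

text \<open>Cross-ratio triple (a representative); infinite distances cancel, i.e. are replaced by 1.\<close>
definition Dfin :: "('a \<Rightarrow> 'a \<Rightarrow> ennreal) \<Rightarrow> 'a \<Rightarrow> 'a \<Rightarrow> real" where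
  "Dfin d u v = (if d u v = \<infinity> then 1 else enn2real (d u v))"

definition crt_rep :: "('a \<Rightarrow> 'a \<Rightarrow> ennreal) \<Rightarrow> 'a quad \<Rightarrow> real \<times> real \<times> real" where
  "crt_rep d P = (case P of (w,x,y,z) \<Rightarrow>
     (Dfin d w x * Dfin d y z, Dfin d w y * Dfin d z x, Dfin d w z * Dfin d x y))"

definition induces :: "('a \<Rightarrow> 'a \<Rightarrow> ennreal) \<Rightarrow> ('a quad \<Rightarrow> triple) \<Rightarrow> bool" where
  "induces d M \<longleftrightarrow> (\<forall>P. admissible P \<longrightarrow> M P = Phibar (crt_rep d P))"

text \<open>Involution of d at p0 (ennreal division: lambda / 0 = infinity for lambda > 0).\<close>
definition involution :: "('a \<Rightarrow> 'a \<Rightarrow> ennreal) \<Rightarrow> 'a \<Rightarrow> 'a \<Rightarrow> 'a \<Rightarrow> ennreal" where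
  "involution d p0 x y =
     (if x = y then 0
      else if x \<in> infpts d then 1 / d p0 y
      else if y \<in> infpts d then 1 / d x p0
      else d x y / (d x p0 * d p0 y))"

definition cball_d :: "('a \<Rightarrow> 'a \<Rightarrow> ennreal) \<Rightarrow> 'a \<Rightarrow> real \<Rightarrow> 'a set" where
  "cball_d d x r = {y. d x y \<le> ennreal r}"

definition haus_pre :: "('a \<Rightarrow> 'a \<Rightarrow> ennreal) \<Rightarrow> real \<Rightarrow> real \<Rightarrow> 'a set \<Rightarrow> ennreal" where
  "haus_pre d s \<delta> A =
     (INF C \<in> {(I, c, r). (\<forall>i\<in>I. 0 < r i \<and> r i \<le> \<delta>) \<and>
                         A - infpts d \<subseteq> (\<Union>i\<in>I. cball_d d (c i) (r i))}.
        (case C of (I, c, r) \<Rightarrow> (\<Sum>i. if i \<in> (I::nat set) then ennreal ((r i :: real) powr s) else 0)))"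

definition haus_meas :: "('a \<Rightarrow> 'a \<Rightarrow> ennreal) \<Rightarrow> real \<Rightarrow> 'a set \<Rightarrow> ennreal" where
  "haus_meas d s A = (SUP \<delta> \<in> {0<..}. haus_pre d s \<delta> A)"

definition dimH :: "('a \<Rightarrow> 'a \<Rightarrow> ennreal) \<Rightarrow> ereal" where
  "dimH d = Inf (ereal ` {s. haus_meas d s UNIV = 0})"

end

theory Submission
  imports Defs
begin
definition Zc :: "('a \<Rightarrow> 'a \<Rightarrow> ennreal) \<Rightarrow> real \<Rightarrow> 'a set \<Rightarrow> bool" where
  "Zc d s A \<longleftrightarrow> (\<forall>\<delta>>0. \<forall>\<epsilon>>0. \<exists>I c r. (\<forall>i\<in>I. 0 < r i \<and> r i \<le> \<delta>) \<and>
      A \<subseteq> (\<Union>i\<in>I. cball_d d (c i) (r i)) \<and>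
      (\<Sum>i. if i \<in> (I::nat set) then ennreal ((r i :: real) powr s) else 0) < ennreal \<epsilon>)"

lemma ennreal_pos_below: "(0::ennreal) < x \<Longrightarrow> \<exists>e>0. ennreal e < x"
  by (metis add_0 ennreal_le_epsilon leD not_le_imp_less)

lemma haus_pre_zero_iff:
  "haus_pre d s \<delta> A = 0 \<longleftrightarrow> (\<forall>\<epsilon>>0. \<exists>I c r. (\<forall>i\<in>I. 0 < r i \<and> r i \<le> \<delta>) \<and>
      A - infpts d \<subseteq> (\<Union>i\<in>I. cball_d d (c i) (r i)) \<and>
      (\<Sum>i. if i \<in> (I::nat set) then ennreal ((r i :: real) powr s) else 0) < ennreal \<epsilon>)"
proof -
  let ?S = "{(I, c, r). (\<forall>i\<in>I. 0 < r i \<and> r i \<le> \<delta>) \<and>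
                         A - infpts d \<subseteq> (\<Union>i\<in>I. cball_d d (c i) (r i))}"
  let ?f = "\<lambda>C. (case C of (I, c, r) \<Rightarrow> (\<Sum>i. if i \<in> (I::nat set) then ennreal ((r i :: real) powr s) else 0))"
  have 1: "haus_pre d s \<delta> A = (INF C\<in>?S. ?f C)" unfolding haus_pre_def by simp
  have 2: "(INF C\<in>?S. ?f C) = 0 \<longleftrightarrow> (\<forall>\<epsilon>>0. (INF C\<in>?S. ?f C) < ennreal \<epsilon>)"
  proof
    assume "(INF C\<in>?S. ?f C) = 0" then show "\<forall>\<epsilon>>0. (INF C\<in>?S. ?f C) < ennreal \<epsilon>" by simp
  next
    assume h: "\<forall>\<epsilon>>0. (INF C\<in>?S. ?f C) < ennreal \<epsilon>"
    show "(INF C\<in>?S. ?f C) = 0"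
    proof (rule ccontr)
      assume "(INF C\<in>?S. ?f C) \<noteq> 0"
      then have "0 < (INF C\<in>?S. ?f C)" by (simp add: zero_less_iff_neq_zero)
      then obtain e where "0 < e" "ennreal e < (INF C\<in>?S. ?f C)"
        using ennreal_pos_below[OF \<open>0 < (INF C\<in>?S. ?f C)\<close>] by (elim exE conjE)
      moreover have "(INF C\<in>?S. ?f C) < ennreal e" by (rule h[rule_format, OF \<open>0 < e\<close>])
      ultimately show False by (meson less_asym)
    qed
  qed
  have 3: "\<And>e. (INF C\<in>?S. ?f C) < e \<longleftrightarrow> (\<exists>C\<in>?S. ?f C < e)" by (rule INF_less_iff)
  have 4: "\<And>e. (\<exists>C\<in>?S. ?f C < e) \<longleftrightarrow> (\<exists>I c r. (\<forall>i\<in>I. 0 < r i \<and> r i \<le> \<delta>) \<and>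
      A - infpts d \<subseteq> (\<Union>i\<in>I. cball_d d (c i) (r i)) \<and>
      (\<Sum>i. if i \<in> (I::nat set) then ennreal ((r i :: real) powr s) else 0) < e)"
    by fastforce
  show ?thesis unfolding 1 2 3 4 ..
qed


lemma haus_meas_zero_iff: "haus_meas d s A = 0 \<longleftrightarrow> Zc d s (A - infpts d)"
proof -
  have "haus_meas d s A = 0 \<longleftrightarrow> (\<forall>\<delta>\<in>{0<..}. haus_pre d s \<delta> A = 0)"
    unfolding haus_meas_def using SUP_bot_conv(1)[of "\<lambda>\<delta>. haus_pre d s \<delta> A" "{0<..}"]
    by (simp add: bot_ennreal)
  then show ?thesis unfolding haus_pre_zero_iff Zc_def Ball_def greaterThan_iff .
qed

lemma Zc_mono: "A \<subseteq> B \<Longrightarrow> Zc d s B \<Longrightarrow> Zc d s A"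
  unfolding Zc_def by (meson order_trans)

lemma Zc_neg:
  assumes "s \<le> 0" "x \<in> A" shows "\<not> Zc d s A"
proof
  assume Z: "Zc d s A"
  obtain I c r where r: "\<forall>i\<in>I. 0 < r i \<and> r i \<le> 1"
    and cov: "A \<subseteq> (\<Union>i\<in>I. cball_d d (c i) (r i))"
    and sm: "(\<Sum>i. if i \<in> (I::nat set) then ennreal ((r i :: real) powr s) else 0) < ennreal 1"
    using Z[unfolded Zc_def, rule_format, OF zero_less_one zero_less_one] by blast
  obtain i where i: "i \<in> I" using cov assms(2) by blast
  have "(if i \<in> I then ennreal (r i powr s) else 0) < ennreal 1"
    using ennreal_suminf_lessD[OF sm] by blast
  then have "r i powr s < 1" using i by (simp add: ennreal_less_iff)
  moreover have "1 \<le> r i powr s"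
  proof -
    have "r i powr s = (1 / r i) powr (- s)" using r i by (simp add: powr_divide powr_minus_divide)
    moreover have "1 \<le> 1 / r i" using r i by simp
    ultimately show ?thesis using assms(1) by (simp add: ge_one_powr_ge_zero)
  qed
  ultimately show False by simp
qed

lemma Zc_single:
  assumes "0 < s" "d p p = 0" shows "Zc d s {p}"
  unfolding Zc_def
proof (intro allI impI)
  fix \<delta> \<epsilon> :: real assume "0 < \<delta>" "0 < \<epsilon>"
  define \<rho> where "\<rho> = min \<delta> ((\<epsilon>/2) powr (1/s))"
  have \<rho>: "0 < \<rho>" "\<rho> \<le> \<delta>" using \<open>0 < \<delta>\<close> \<open>0 < \<epsilon>\<close> unfolding \<rho>_def by auto
  have "\<rho> powr s \<le> ((\<epsilon>/2) powr (1/s)) powr s"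
    using \<rho> assms(1) unfolding \<rho>_def by (intro powr_mono2) auto
  also have "\<dots> = \<epsilon>/2" using assms(1) \<open>0 < \<epsilon>\<close> by (simp add: powr_powr)
  finally have lt: "\<rho> powr s < \<epsilon>" using \<open>0 < \<epsilon>\<close> by simp
  have sm: "(\<Sum>i. if i \<in> {0::nat} then ennreal (\<rho> powr s) else 0) = ennreal (\<rho> powr s)"
    by (subst suminf_finite[of "{0}"]) auto
  show "\<exists>I c r. (\<forall>i\<in>I. 0 < r i \<and> r i \<le> \<delta>) \<and> {p} \<subseteq> (\<Union>i\<in>I. cball_d d (c i) (r i)) \<and>
      (\<Sum>i. if i \<in> (I::nat set) then ennreal ((r i :: real) powr s) else 0) < ennreal \<epsilon>"
    apply (rule exI[of _ "{0}"], rule exI[of _ "\<lambda>_. p"], rule exI[of _ "\<lambda>_. \<rho>"])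
    using \<rho> lt assms(2) sm by (auto simp: cball_d_def ennreal_less_iff)
qed


lemma Zc_transfer:
  assumes L: "0 < L" "0 < \<delta>0"
    and H: "\<forall>c r x y. 0 < r \<and> r \<le> \<delta>0 \<and> x \<in> A \<and> y \<in> A \<and> d' c x \<le> ennreal r \<and> d' c y \<le> ennreal r
              \<longrightarrow> d x y \<le> ennreal (L * r)"
    and Z: "Zc d' s A"
  shows "Zc d s A"
  unfolding Zc_def
proof (intro allI impI)
  fix \<delta> \<epsilon> :: real assume "0 < \<delta>" "0 < \<epsilon>"
  define \<delta>1 where "\<delta>1 = min \<delta>0 (\<delta>/L)"
  have "0 < \<delta>1" using L \<open>0 < \<delta>\<close> unfolding \<delta>1_def by auto
  have Lp: "0 < L powr s" using L by simp
  have "0 < \<epsilon> / L powr s" using Lp \<open>0 < \<epsilon>\<close> by simp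
  obtain I c r where r: "\<forall>i\<in>I. 0 < r i \<and> r i \<le> \<delta>1"
    and cov: "A \<subseteq> (\<Union>i\<in>I. cball_d d' (c i) (r i))"
    and sm: "(\<Sum>i. if i \<in> (I::nat set) then ennreal ((r i :: real) powr s) else 0) < ennreal (\<epsilon> / L powr s)"
    using Z[unfolded Zc_def, rule_format, OF \<open>0 < \<delta>1\<close> \<open>0 < \<epsilon> / L powr s\<close>] by blast
  define c' where "c' i = (if \<exists>a\<in>A. d' (c i) a \<le> ennreal (r i) then (SOME a. a \<in> A \<and> d' (c i) a \<le> ennreal (r i)) else c i)" for i
  define r' where "r' i = L * r i" for i
  have r': "\<forall>i\<in>I. 0 < r' i \<and> r' i \<le> \<delta>"
  proof
    fix i assume "i \<in> I"
    then have "0 < r i" "r i \<le> \<delta> / L" using r unfolding \<delta>1_def by auto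
    then show "0 < r' i \<and> r' i \<le> \<delta>" unfolding r'_def using L by (auto simp: field_simps)
  qed
  have cov': "A \<subseteq> (\<Union>i\<in>I. cball_d d (c' i) (r' i))"
  proof
    fix y assume "y \<in> A"
    then obtain i where i: "i \<in> I" "d' (c i) y \<le> ennreal (r i)" using cov unfolding cball_d_def by blast
    then have ex: "\<exists>a. a \<in> A \<and> d' (c i) a \<le> ennreal (r i)" using \<open>y \<in> A\<close> by blast
    then have "\<exists>a\<in>A. d' (c i) a \<le> ennreal (r i)" by blast
    then have ci: "c' i = (SOME a. a \<in> A \<and> d' (c i) a \<le> ennreal (r i))" unfolding c'_def by simp
    have a: "c' i \<in> A \<and> d' (c i) (c' i) \<le> ennreal (r i)" unfolding ci by (rule someI_ex[OF ex])
    have "0 < r i" "r i \<le> \<delta>0" using r i(1) unfolding \<delta>1_def by auto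
    then have "d (c' i) y \<le> ennreal (L * r i)" using H a i(2) \<open>y \<in> A\<close> by blast
    then show "y \<in> (\<Union>i\<in>I. cball_d d (c' i) (r' i))" using i(1) unfolding cball_d_def r'_def by blast
  qed
  have eq: "(\<Sum>i. if i \<in> I then ennreal (r' i powr s) else 0)
      = ennreal (L powr s) * (\<Sum>i. if i \<in> I then ennreal (r i powr s) else 0)"
  proof -
    have "\<And>i. (if i \<in> I then ennreal (r' i powr s) else 0)
        = ennreal (L powr s) * (if i \<in> I then ennreal (r i powr s) else 0)"
      using r L unfolding r'_def \<delta>1_def by (auto simp: powr_mult ennreal_mult)
    then show ?thesis by (simp add: ennreal_suminf_cmult)
  qed
  have "ennreal (L powr s) * (\<Sum>i. if i \<in> I then ennreal (r i powr s) else 0) < ennreal \<epsilon>"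
  proof -
    let ?X = "(\<Sum>i. if i \<in> I then ennreal (r i powr s) else 0)"
    have "?X \<noteq> top" using sm by (metis ennreal_less_top order.strict_trans top.not_eq_extremum)
    then obtain x where x: "?X = ennreal x" "0 \<le> x" by (cases ?X) auto
    then have "x < \<epsilon> / L powr s" using sm \<open>0 < \<epsilon> / L powr s\<close> by (simp add: ennreal_less_iff)
    then have "L powr s * x < \<epsilon>" using Lp by (simp add: field_simps)
    then show ?thesis using x Lp by (simp add: ennreal_mult[symmetric] ennreal_less_iff)
  qed
  then show "\<exists>I c r. (\<forall>i\<in>I. 0 < r i \<and> r i \<le> \<delta>) \<and> A \<subseteq> (\<Union>i\<in>I. cball_d d (c i) (r i)) \<and>
      (\<Sum>i. if i \<in> (I::nat set) then ennreal ((r i :: real) powr s) else 0) < ennreal \<epsilon>"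
    using r' cov' eq by metis
qed


lemma prod_decode_le: "prod_decode m = (a, b) \<Longrightarrow> a \<le> m \<and> b \<le> m"
  by (metis le_prod_encode_1 le_prod_encode_2 prod_decode_inverse)

lemma geom_eps: "(\<Sum>n<N. \<epsilon> / 2 ^ (n + 2)) = \<epsilon> / 2 - \<epsilon> / 2 ^ (N + 1) " for \<epsilon> :: real
proof (induction N)
  case 0 then show ?case by simp
next
  case (Suc N)
  have "(2::real) ^ (Suc N + 1) = 2 * 2 ^ (N+1)" by simp
  moreover have "(2::real) ^ (N + 2) = 2 * 2 ^ (N+1)" by simp
  ultimately show ?case using Suc by (simp add: field_simps)
qed

lemma sum_ennreal_eps: "0 < (\<epsilon>::real) \<Longrightarrow> (\<Sum>n<N. ennreal (\<epsilon> / 2 ^ (n+2))) = ennreal (\<Sum>n<N. \<epsilon> / 2 ^ (n+2))"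
  by (rule sum_ennreal) simp

lemma Zc_Union_nat:
  fixes B :: "nat \<Rightarrow> 'a set"
  assumes Z: "\<And>n. Zc d s (B n)"
  shows "Zc d s (\<Union>n. B n)"
  unfolding Zc_def
proof (intro allI impI)
  fix \<delta> \<epsilon> :: real assume "0 < \<delta>" "0 < \<epsilon>"
  define Q where "Q n I c r \<longleftrightarrow> (\<forall>i\<in>I. 0 < r i \<and> r i \<le> \<delta>) \<and>
      B n \<subseteq> (\<Union>i\<in>I. cball_d d (c i) (r i)) \<and>
      (\<Sum>i. if i \<in> (I::nat set) then ennreal ((r i :: real) powr s) else 0) < ennreal (\<epsilon> / 2 ^ (n+2))"
    for n I c r
  have ex: "\<forall>n. \<exists>I c r. Q n I c r"
  proof
    fix n
    have "0 < \<epsilon> / 2 ^ (n+2)" using \<open>0 < \<epsilon>\<close> by simp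
    from Z[of n, unfolded Zc_def, rule_format, OF \<open>0 < \<delta>\<close> this]
    show "\<exists>I c r. Q n I c r" unfolding Q_def .
  qed
  obtain I where h1: "\<forall>n. \<exists>c r. Q n (I n) c r" using choice[OF ex] by blast
  obtain c where h2: "\<forall>n. \<exists>r. Q n (I n) (c n) r" using choice[OF h1] by blast
  obtain r where h3: "\<forall>n. Q n (I n) (c n) (r n)" using choice[OF h2] by blast
  have Qn: "(\<forall>i\<in>I n. 0 < r n i \<and> r n i \<le> \<delta>) \<and>
      B n \<subseteq> (\<Union>i\<in>I n. cball_d d (c n i) (r n i)) \<and>
      (\<Sum>i. if i \<in> I n then ennreal (r n i powr s) else 0) < ennreal (\<epsilon> / 2 ^ (n+2))" for n
    using h3 unfolding Q_def by blast
  have r: "\<And>n i. i \<in> I n \<Longrightarrow> 0 < r n i \<and> r n i \<le> \<delta>" using Qn by blast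
  have cov: "\<And>n. B n \<subseteq> (\<Union>i\<in>I n. cball_d d (c n i) (r n i))" using Qn by blast
  have sm: "\<And>n. (\<Sum>i. if i \<in> I n then ennreal (r n i powr s) else 0) < ennreal (\<epsilon> / 2 ^ (n+2))"
    using Qn by blast
  define f where "f p = (case p of (n, i) \<Rightarrow> if i \<in> I n then ennreal (r n i powr s) else 0)" for p
  define J where "J = {m. snd (prod_decode m) \<in> I (fst (prod_decode m))}"
  define c' where "c' m = c (fst (prod_decode m)) (snd (prod_decode m))" for m
  define r' where "r' m = r (fst (prod_decode m)) (snd (prod_decode m))" for m
  have r': "\<forall>m\<in>J. 0 < r' m \<and> r' m \<le> \<delta>" unfolding J_def r'_def using r by simp
  have cov': "(\<Union>n. B n) \<subseteq> (\<Union>m\<in>J. cball_d d (c' m) (r' m))"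
  proof
    fix y assume "y \<in> (\<Union>n. B n)"
    then obtain n where "y \<in> B n" by blast
    then obtain i where i: "i \<in> I n" "y \<in> cball_d d (c n i) (r n i)" using cov[of n] by blast
    have "prod_encode (n, i) \<in> J" unfolding J_def using i by simp
    moreover have "y \<in> cball_d d (c' (prod_encode (n, i))) (r' (prod_encode (n, i)))"
      unfolding c'_def r'_def using i by simp
    ultimately show "y \<in> (\<Union>m\<in>J. cball_d d (c' m) (r' m))" by blast
  qed
  have g: "(\<lambda>m. if m \<in> J then ennreal (r' m powr s) else 0) = f \<circ> prod_decode"
  proof
    fix m
    obtain n i where ni: "prod_decode m = (n, i)" by (cases "prod_decode m")
    show "(if m \<in> J then ennreal (r' m powr s) else 0) = (f \<circ> prod_decode) m"
      unfolding f_def J_def r'_def using ni by simp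
  qed
  have bound: "(\<Sum>m. (f \<circ> prod_decode) m) \<le> ennreal (\<epsilon> / 2)"
  proof (rule ennreal_suminf_bound_add[where y = 0, simplified])
    fix N
    have "sum (f \<circ> prod_decode) {..<N} = sum f (prod_decode ` {..<N})"
      by (simp add: sum.reindex inj_prod_decode)
    also have "\<dots> \<le> sum f ({..<N} \<times> {..<N})"
    proof (rule sum_mono2)
      show "prod_decode ` {..<N} \<subseteq> {..<N} \<times> {..<N}"
      proof
        fix p assume "p \<in> prod_decode ` {..<N}"
        then obtain m where "m < N" "p = prod_decode m" by auto
        then show "p \<in> {..<N} \<times> {..<N}" using prod_decode_le[of m "fst p" "snd p"] by (simp add: mem_Times_iff)
      qed
    qed auto
    also have "\<dots> = (\<Sum>n<N. \<Sum>i<N. f (n, i))" by (simp add: sum.cartesian_product)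
    also have "\<dots> \<le> (\<Sum>n<N. ennreal (\<epsilon> / 2 ^ (n+2)))"
    proof (rule sum_mono)
      fix n
      have "(\<Sum>i<N. f (n, i)) \<le> (\<Sum>i. f (n, i))" by (rule sum_le_suminf) auto
      also have "\<dots> \<le> ennreal (\<epsilon> / 2 ^ (n+2))" using sm[of n] unfolding f_def by simp
      finally show "(\<Sum>i<N. f (n, i)) \<le> ennreal (\<epsilon> / 2 ^ (n+2))" .
    qed
    also have "\<dots> = ennreal (\<Sum>n<N. \<epsilon> / 2 ^ (n+2))"
      by (rule sum_ennreal_eps[OF \<open>0 < \<epsilon>\<close>])
    also have "\<dots> \<le> ennreal (\<epsilon> / 2)" unfolding geom_eps using \<open>0 < \<epsilon>\<close> by (intro ennreal_leI) simp
    finally show "sum (f \<circ> prod_decode) {..<N} \<le> ennreal (\<epsilon> / 2)" .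
  qed
  also have "\<dots> < ennreal \<epsilon>" using \<open>0 < \<epsilon>\<close> by (simp add: ennreal_less_iff)
  finally have "(\<Sum>m. if m \<in> J then ennreal (r' m powr s) else 0) < ennreal \<epsilon>" unfolding g .
  then show "\<exists>I c r. (\<forall>i\<in>I. 0 < r i \<and> r i \<le> \<delta>) \<and> (\<Union>n. B n) \<subseteq> (\<Union>i\<in>I. cball_d d (c i) (r i)) \<and>
      (\<Sum>i. if i \<in> (I::nat set) then ennreal ((r i :: real) powr s) else 0) < ennreal \<epsilon>"
    using r' cov' by (intro exI[of _ J] exI[of _ c'] exI[of _ r']) simp
qed

lemma Zc_empty: "Zc d s {}"
  unfolding Zc_def by (intro allI impI exI[of _ "{}"]) auto

lemma Zc_Union:
  assumes "countable S" "\<And>B. B \<in> S \<Longrightarrow> Zc d s B"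
  shows "Zc d s (\<Union>S)"
proof (cases "S = {}")
  case True then show ?thesis by (simp add: Zc_empty)
next
  case False
  have "\<Union>S = (\<Union>n. from_nat_into S n)" using range_from_nat_into[OF False assms(1)] by simp
  moreover have "\<And>n. Zc d s (from_nat_into S n)" using assms(2) from_nat_into[OF False] by blast
  ultimately show ?thesis using Zc_Union_nat by metis
qed

definition HH :: "('a \<Rightarrow> 'a \<Rightarrow> ennreal) \<Rightarrow> ('a \<Rightarrow> 'a \<Rightarrow> ennreal) \<Rightarrow> 'a set \<Rightarrow> bool" where
  "HH e e' A \<longleftrightarrow> (\<exists>L>0. \<exists>\<delta>0>0. \<forall>c r x y. 0 < r \<and> r \<le> \<delta>0 \<and> x \<in> A \<and> y \<in> A \<and> e c x \<le> ennreal r \<and> e c y \<le> ennreal r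
              \<longrightarrow> e' x y \<le> ennreal (L * r))"

lemma Zc_HH: assumes "HH e e' A" "Zc e s A" shows "Zc e' s A"
proof -
  obtain L \<delta>0 where "0 < L" "0 < \<delta>0" and H: "\<forall>c r x y. 0 < r \<and> r \<le> \<delta>0 \<and> x \<in> A \<and> y \<in> A \<and> e c x \<le> ennreal r \<and> e c y \<le> ennreal r
              \<longrightarrow> e' x y \<le> ennreal (L * r)"
    using assms(1) unfolding HH_def by blast
  show ?thesis by (rule Zc_transfer[OF \<open>0 < L\<close> \<open>0 < \<delta>0\<close> H assms(2)])
qed

lemma one_dir:
  assumes ne: "x0 \<notin> infpts d"
    and z: "\<forall>x. d' x x = 0"
    and cF: "countable F" and cS: "countable S"
    and covd': "UNIV - infpts d' \<subseteq> F \<union> \<Union>S"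
    and sub: "\<forall>A\<in>S. A \<subseteq> UNIV - infpts d"
    and H: "\<forall>A\<in>S. HH d d' A"
    and Z: "Zc d s (UNIV - infpts d)"
  shows "Zc d' s (UNIV - infpts d')"
proof (cases "s \<le> 0")
  case True
  have "x0 \<in> UNIV - infpts d" using ne by simp
  from Zc_neg[OF True this, of d] Z show ?thesis by contradiction
next
  case False
  then have s: "0 < s" by simp
  let ?S' = "S \<union> (\<lambda>p. {p}) ` F"
  have "countable ?S'" using cF cS by simp
  moreover have "\<And>B. B \<in> ?S' \<Longrightarrow> Zc d' s B"
  proof -
    fix B assume "B \<in> ?S'"
    then show "Zc d' s B"
    proof
      assume "B \<in> S"
      then have "B \<subseteq> UNIV - infpts d" "HH d d' B" using sub H by auto
      then show ?thesis using Zc_HH[of d d' B s] Zc_mono[of B "UNIV - infpts d" d s] Z by simp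
    next
      assume "B \<in> (\<lambda>p. {p}) ` F"
      then obtain p where "B = {p}" by blast
      then show ?thesis using Zc_single[OF s, of d' p] z by simp
    qed
  qed
  ultimately have "Zc d' s (\<Union>?S')" by (rule Zc_Union)
  moreover have "\<Union>?S' = F \<union> \<Union>S" by blast
  ultimately show ?thesis using Zc_mono[OF covd'] by simp
qed

lemma dimH_pieces:
  assumes ne: "x0 \<notin> infpts d" "x1 \<notin> infpts d'"
    and z: "\<forall>x. d x x = 0" "\<forall>x. d' x x = 0"
    and cF: "countable F" and cS: "countable S"
    and covd: "UNIV - infpts d \<subseteq> F \<union> \<Union>S" and covd': "UNIV - infpts d' \<subseteq> F \<union> \<Union>S"
    and sub: "\<forall>A\<in>S. A \<subseteq> UNIV - infpts d \<and> A \<subseteq> UNIV - infpts d'"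
    and H: "\<forall>A\<in>S. HH d d' A \<and> HH d' d A"
  shows "dimH d = dimH d'"
proof -
  have s1: "\<forall>A\<in>S. A \<subseteq> UNIV - infpts d" and s2: "\<forall>A\<in>S. A \<subseteq> UNIV - infpts d'"
    and h1: "\<forall>A\<in>S. HH d d' A" and h2: "\<forall>A\<in>S. HH d' d A" using sub H by auto
  have "\<And>s. haus_meas d s UNIV = 0 \<longleftrightarrow> haus_meas d' s UNIV = 0"
    unfolding haus_meas_zero_iff
  proof
    fix s assume "Zc d s (UNIV - infpts d)"
    then show "Zc d' s (UNIV - infpts d')"
      by (rule one_dir[OF ne(1) z(2) cF cS covd' s1 h1])
  next
    fix s assume "Zc d' s (UNIV - infpts d')"
    then show "Zc d s (UNIV - infpts d)"
      by (rule one_dir[OF ne(2) z(1) cF cS covd s2 h2])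
  qed
  then show ?thesis unfolding dimH_def by simp
qed

lemma ennreal_mult_max: "(c::ennreal) * max a b = max (c*a) (c*b)"
proof (cases "a \<le> b")
  case True then have "c*a \<le> c*b" by (rule mult_left_mono) simp
  then show ?thesis using True by (simp add: max_absorb2)
next
  case False then have "c*b \<le> c*a" by (intro mult_left_mono) simp_all
  then show ?thesis using False by (simp add: max_absorb1)
qed

lemma qm_basic:
  assumes "quasi_metric d"
  shows "\<forall>x y. d x y = d y x" "\<forall>x y. d x y = 0 \<longleftrightarrow> x = y"
    "\<exists>K\<ge>1. \<forall>x y z. d x y \<le> ennreal K * max (d x z) (d z y)"
proof -
  have o: "semi_metric d \<or> ext_semi_metric d"
    using assms unfolding quasi_metric_def by (elim conjE)
  have k: "\<exists>K\<ge>1. \<forall>x y z. d x y \<le> ennreal K * max (d x z) (d z y)"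
    using assms unfolding quasi_metric_def by (elim conjE)
  have "(\<forall>x y. d x y = d y x) \<and> (\<forall>x y. d x y = 0 \<longleftrightarrow> x = y)"
    using o
  proof
    assume "semi_metric d" then show ?thesis unfolding semi_metric_def by (elim conjE) (intro conjI)
  next
    assume "ext_semi_metric d" then show ?thesis unfolding ext_semi_metric_def by (elim conjE) (intro conjI)
  qed
  then show "\<forall>x y. d x y = d y x" "\<forall>x y. d x y = 0 \<longleftrightarrow> x = y" by blast+
  show "\<exists>K\<ge>1. \<forall>x y z. d x y \<le> ennreal K * max (d x z) (d z y)" by (rule k)
qed

lemma three_other:
  fixes p q :: 'a
  assumes "distinct [x, y, z :: 'a]" shows "\<exists>u. u \<noteq> p \<and> u \<noteq> q"
proof -
  have "x \<noteq> p \<and> x \<noteq> q \<or> y \<noteq> p \<and> y \<noteq> q \<or> z \<noteq> p \<and> z \<noteq> q" using assms by auto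
  then show ?thesis by blast
qed

lemma qm_infpts:
  fixes d :: "'a \<Rightarrow> 'a \<Rightarrow> ennreal"
  assumes q: "quasi_metric d" and t: "distinct [x, y, z :: 'a]"
  shows "\<exists>\<omega>. infpts d \<subseteq> {\<omega>}" and "\<And>u v. u \<notin> infpts d \<Longrightarrow> v \<notin> infpts d \<Longrightarrow> d u v \<noteq> \<infinity>"
proof -
  have "(\<exists>\<omega>. infpts d \<subseteq> {\<omega>}) \<and> (\<forall>u v. u \<notin> infpts d \<longrightarrow> v \<notin> infpts d \<longrightarrow> d u v \<noteq> \<infinity>)"
  proof (cases "semi_metric d")
    case True
    then have fin: "\<forall>x y. d x y \<noteq> \<infinity>" unfolding semi_metric_def by blast
    have "infpts d = {}"
    proof (rule ccontr)
      assume "infpts d \<noteq> {}"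
      then obtain p where p: "p \<in> infpts d" by blast
      obtain u where "u \<noteq> p" using three_other[OF t, of p p] by blast
      then have "d u p = \<infinity>" using p unfolding infpts_def by blast
      then show False using fin by blast
    qed
    then have "infpts d \<subseteq> {x}" by simp
    then show ?thesis using fin by blast
  next
    case False
    then have "ext_semi_metric d" using q unfolding quasi_metric_def by blast
    then have "\<exists>!p. (\<forall>x. x \<noteq> p \<longrightarrow> d x p = \<infinity>) \<and> (\<forall>x y. x \<noteq> p \<longrightarrow> y \<noteq> p \<longrightarrow> d x y \<noteq> \<infinity>)"
      unfolding ext_semi_metric_def by (elim conjE)
    then have "\<exists>p. (\<forall>x. x \<noteq> p \<longrightarrow> d x p = \<infinity>) \<and> (\<forall>x y. x \<noteq> p \<longrightarrow> y \<noteq> p \<longrightarrow> d x y \<noteq> \<infinity>)"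
      by (rule ex1_implies_ex)
    then obtain \<omega> where w1: "\<forall>x. x \<noteq> \<omega> \<longrightarrow> d x \<omega> = \<infinity>"
      and w2: "\<forall>x y. x \<noteq> \<omega> \<longrightarrow> y \<noteq> \<omega> \<longrightarrow> d x y \<noteq> \<infinity>"
      by (elim exE conjE)
    have "\<omega> \<in> infpts d" using w1 unfolding infpts_def by blast
    have sub: "infpts d \<subseteq> {\<omega>}"
    proof
      fix p assume p: "p \<in> infpts d"
      show "p \<in> {\<omega>}"
      proof (rule ccontr)
        assume "p \<notin> {\<omega>}"
        obtain u where u: "u \<noteq> p" "u \<noteq> \<omega>" using three_other[OF t, of p \<omega>] by blast
        then have "d u p = \<infinity>" using p unfolding infpts_def by blast
        then show False using w2 u \<open>p \<notin> {\<omega>}\<close> by blast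
      qed
    qed
    have "\<forall>u v. u \<notin> infpts d \<longrightarrow> v \<notin> infpts d \<longrightarrow> d u v \<noteq> \<infinity>"
    proof (intro allI impI)
      fix u v assume "u \<notin> infpts d" "v \<notin> infpts d"
      then have "u \<noteq> \<omega>" "v \<noteq> \<omega>" using \<open>\<omega> \<in> infpts d\<close> by auto
      then show "d u v \<noteq> \<infinity>" using w2 by simp
    qed
    then show ?thesis using sub by blast
  qed
  then show "\<exists>\<omega>. infpts d \<subseteq> {\<omega>}" and "\<And>u v. u \<notin> infpts d \<Longrightarrow> v \<notin> infpts d \<Longrightarrow> d u v \<noteq> \<infinity>"
    by blast+
qed

lemma qm_notinf:
  fixes d :: "'a \<Rightarrow> 'a \<Rightarrow> ennreal"
  assumes q: "quasi_metric d" and t: "distinct [x, y, z :: 'a]"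
  shows "\<exists>u. u \<notin> infpts d"
proof -
  obtain \<omega> where "infpts d \<subseteq> {\<omega>}" using qm_infpts(1)[OF q t] by blast
  moreover obtain u where "u \<noteq> \<omega>" using three_other[OF t, of \<omega> \<omega>] by blast
  ultimately show ?thesis by blast
qed

lemma qm_infpts_countable:
  fixes d :: "'a \<Rightarrow> 'a \<Rightarrow> ennreal"
  assumes q: "quasi_metric d" and t: "distinct [x, y, z :: 'a]"
  shows "countable (infpts d)"
proof -
  obtain \<omega> where "infpts d \<subseteq> {\<omega>}" using qm_infpts(1)[OF q t] by blast
  then show ?thesis using countable_subset by blast
qed

lemma HH_lip:
  fixes e e' :: "'a \<Rightarrow> 'a \<Rightarrow> ennreal"
  assumes sym: "\<forall>x y. e x y = e y x" and K: "K \<ge> 1" "\<forall>x y z. e x y \<le> ennreal K * max (e x z) (e z y)"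
    and C: "0 < C" "\<forall>x\<in>A. \<forall>y\<in>A. e' x y \<le> ennreal C * e x y"
  shows "HH e e' A"
proof -
  have main: "\<forall>c r x y. 0 < r \<and> r \<le> 1 \<and> x \<in> A \<and> y \<in> A \<and> e c x \<le> ennreal r \<and> e c y \<le> ennreal r
              \<longrightarrow> e' x y \<le> ennreal (C * K * r)"
  proof (intro allI impI)
  fix c r x y
  assume h: "0 < r \<and> r \<le> 1 \<and> x \<in> A \<and> y \<in> A \<and> e c x \<le> ennreal r \<and> e c y \<le> ennreal r"
  have "e x y \<le> ennreal K * max (e x c) (e c y)" using K(2) by blast
  also have "\<dots> = ennreal K * max (e c x) (e c y)" using sym by metis
  also have "\<dots> \<le> ennreal K * ennreal r" using h by (intro mult_left_mono) auto
  finally have "e x y \<le> ennreal K * ennreal r" .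
  then have "ennreal C * e x y \<le> ennreal C * (ennreal K * ennreal r)" by (rule mult_left_mono) simp
  also have "\<dots> = ennreal (C * K * r)" using C K h by (simp add: ennreal_mult[symmetric] mult.assoc)
  finally show "e' x y \<le> ennreal (C * K * r)" using C(2) h by (meson order_trans)
  qed
  have "0 < C * K" using C K by simp
  show ?thesis unfolding HH_def
    apply (rule exI[of _ "C * K"])
    apply (rule conjI, rule \<open>0 < C * K\<close>)
    apply (rule exI[of _ "1::real"])
    using main by simp
qed

lemma infpts_scale: "0 < l \<Longrightarrow> infpts (\<lambda>x y. ennreal l * d x y) = infpts d"
  unfolding infpts_def by (simp add: ennreal_mult_eq_top_iff)

lemma part1:
  fixes d :: "'a \<Rightarrow> 'a \<Rightarrow> ennreal"
  assumes q: "quasi_metric d" and t: "distinct [x, y, z :: 'a]" and l: "0 < l"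
  shows "dimH (\<lambda>x y. ennreal l * d x y) = dimH d"
proof -
  define dl where "dl = (\<lambda>x y. ennreal l * d x y)"
  have idl: "infpts dl = infpts d" unfolding dl_def using infpts_scale[OF l] .
  have sym: "\<forall>x y. d x y = d y x" and z: "\<forall>x y. d x y = 0 \<longleftrightarrow> x = y" using qm_basic[OF q] by blast+
  obtain K where K: "K \<ge> 1" "\<forall>x y z. d x y \<le> ennreal K * max (d x z) (d z y)" using qm_basic(3)[OF q] by blast
  have syml: "\<forall>x y. dl x y = dl y x" unfolding dl_def using sym by simp
  have Kl: "\<forall>x y z. dl x y \<le> ennreal K * max (dl x z) (dl z y)"
  proof (intro allI)
    fix x y z
    have "dl x y \<le> ennreal l * (ennreal K * max (d x z) (d z y))" unfolding dl_def using K(2)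
      by (intro mult_left_mono) auto
    also have "\<dots> = ennreal K * (ennreal l * max (d x z) (d z y))" by (simp add: ac_simps)
    also have "\<dots> = ennreal K * max (dl x z) (dl z y)" unfolding dl_def by (simp add: ennreal_mult_max)
    finally show "dl x y \<le> ennreal K * max (dl x z) (dl z y)" .
  qed
  obtain x0 where x0: "x0 \<notin> infpts d" using qm_notinf[OF q t] by blast
  let ?A = "UNIV - infpts d"
  have h1: "HH dl d ?A"
  proof (rule HH_lip[OF syml K(1) Kl, of "1/l"])
    show "0 < 1 / l" using l by simp
    show "\<forall>x\<in>?A. \<forall>y\<in>?A. d x y \<le> ennreal (1 / l) * dl x y"
      unfolding dl_def using l by (simp add: mult.assoc[symmetric] ennreal_mult[symmetric])
  qed
  have h2: "HH d dl ?A"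
  proof (rule HH_lip[OF sym K(1) K(2), of l])
    show "0 < l" by (rule l)
    show "\<forall>x\<in>?A. \<forall>y\<in>?A. dl x y \<le> ennreal l * d x y" unfolding dl_def by simp
  qed
  have "dimH dl = dimH d"
    by (rule dimH_pieces[where F = "{}" and S = "{?A}"]) (use x0 idl z h1 h2 in \<open>auto simp: dl_def\<close>)
  then show ?thesis unfolding dl_def .
qed

lemma part2_facts:
  fixes d :: "'a \<Rightarrow> 'a \<Rightarrow> ennreal" and p0 :: 'a
  assumes q: "quasi_metric d" and t: "distinct [x, y, z :: 'a]"
  shows "\<And>u v. u \<notin> infpts d \<Longrightarrow> v \<notin> infpts d \<Longrightarrow> d u v = ennreal (enn2real (d u v))"
    and "\<And>u v. u \<notin> infpts d \<Longrightarrow> v \<notin> infpts d \<Longrightarrow> u \<noteq> v \<Longrightarrow> 0 < enn2real (d u v)"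
proof -
  have z: "\<forall>x y. d x y = 0 \<longleftrightarrow> x = y" using qm_basic[OF q] by blast
  fix u v assume u: "u \<notin> infpts d" and v: "v \<notin> infpts d"
  have "d u v \<noteq> \<infinity>" using qm_infpts(2)[OF q t u v] .
  then have nt: "d u v < top" by (simp add: less_top[symmetric])
  then show "d u v = ennreal (enn2real (d u v))" by simp
  assume "u \<noteq> v"
  then have "0 < d u v" using z by (simp add: zero_less_iff_neq_zero)
  then show "0 < enn2real (d u v)" using nt by (simp add: enn2real_positive_iff)
qed

lemma involution_real:
  fixes d :: "'a \<Rightarrow> 'a \<Rightarrow> ennreal"
  assumes q: "quasi_metric d" and t: "distinct [x, y, z :: 'a]" and p0: "p0 \<notin> infpts d"
    and u: "u \<notin> infpts d" "u \<noteq> p0" and v: "v \<notin> infpts d" "v \<noteq> p0" and uv: "u \<noteq> v"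
  shows "involution d p0 u v = ennreal (enn2real (d u v) / (enn2real (d u p0) * enn2real (d p0 v)))"
proof -
  note F = part2_facts[OF q t]
  have "involution d p0 u v = d u v / (d u p0 * d p0 v)" unfolding involution_def using u v uv by simp
  also have "\<dots> = ennreal (enn2real (d u v)) / (ennreal (enn2real (d u p0)) * ennreal (enn2real (d p0 v)))"
    using F(1)[OF u(1) v(1)] F(1)[OF u(1) p0] F(1)[OF p0 v(1)] by simp
  also have "\<dots> = ennreal (enn2real (d u v)) / ennreal (enn2real (d u p0) * enn2real (d p0 v))"
    by (simp add: ennreal_mult)
  also have "\<dots> = ennreal (enn2real (d u v) / (enn2real (d u p0) * enn2real (d p0 v)))"
    using F(2)[OF u(1) p0 u(2)] F(2)[OF p0 v(1) v(2)[symmetric]] by (intro divide_ennreal) simp_all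
  finally show ?thesis .
qed

lemma infpts_involution:
  fixes d :: "'a \<Rightarrow> 'a \<Rightarrow> ennreal"
  assumes q: "quasi_metric d" and t: "distinct [x, y, z :: 'a]" and p0: "p0 \<notin> infpts d"
  shows "infpts (involution d p0) \<subseteq> {p0}"
proof
  fix p assume p: "p \<in> infpts (involution d p0)"
  show "p \<in> {p0}"
  proof (rule ccontr)
    assume "p \<notin> {p0}"
    then have pp: "p \<noteq> p0" by simp
    have z: "\<forall>x y. d x y = 0 \<longleftrightarrow> x = y" using qm_basic[OF q] by blast
    obtain u where u: "u \<noteq> p" "u \<noteq> p0" using three_other[OF t, of p p0] by blast
    have "involution d p0 u p = \<infinity>" using p u unfolding infpts_def by blast
    moreover have "involution d p0 u p \<noteq> top"
    proof (cases "u \<in> infpts d")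
      case True
      then have "involution d p0 u p = 1 / d p0 p" unfolding involution_def using u by simp
      moreover have "d p0 p \<noteq> 0" using z pp by auto
      ultimately show ?thesis by (simp add: ennreal_divide_eq_top_iff)
    next
      case un: False
      show ?thesis
      proof (cases "p \<in> infpts d")
        case True
        then have "involution d p0 u p = 1 / d u p0" unfolding involution_def using u un by simp
        moreover have "d u p0 \<noteq> 0" using z u by auto
        ultimately show ?thesis by (simp add: ennreal_divide_eq_top_iff)
      next
        case False
        then have "involution d p0 u p = d u p / (d u p0 * d p0 p)" unfolding involution_def using u un by simp
        moreover have "d u p0 * d p0 p \<noteq> 0" using z u pp by auto
        moreover have "d u p \<noteq> top" using qm_infpts(2)[OF q t un False] by simp
        ultimately show ?thesis by (simp add: ennreal_divide_eq_top_iff)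
      qed
    qed
    ultimately show False by simp
  qed
qed


lemma ennreal_inv_real: "0 < v \<Longrightarrow> 1 / ennreal v = ennreal (1 / v)"
  by (metis divide_ennreal ennreal_1 zero_le_one)

lemma log_piece:
  assumes "0 < v" shows "\<exists>k::int. 2 powr k \<le> v \<and> v < 2 powr (k + 1)"
proof -
  define k where "k = \<lfloor>log 2 v\<rfloor>"
  have "k \<le> log 2 v" "log 2 v < k + 1" unfolding k_def by linarith+
  then have "2 powr k \<le> 2 powr (log 2 v)" "2 powr (log 2 v) < 2 powr (k + 1)"
    by (auto intro: powr_mono powr_less_mono)
  then show ?thesis using assms by (intro exI[of _ k]) simp
qed

lemma part2:
  fixes d :: "'a \<Rightarrow> 'a \<Rightarrow> ennreal" and p0 :: 'a
  assumes q: "quasi_metric d" and t: "distinct [x, y, z :: 'a]" and p0: "p0 \<notin> infpts d"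
  shows "dimH (involution d p0) = dimH d"
proof -
  define dv where "dv = involution d p0"
  define D where "D u v = enn2real (d u v)" for u v
  note F = part2_facts[OF q t, folded D_def]
  have sym: "\<forall>x y. d x y = d y x" and z: "\<forall>x y. d x y = 0 \<longleftrightarrow> x = y" using qm_basic[OF q] by blast+
  obtain K where K: "K \<ge> 1" "\<forall>x y z. d x y \<le> ennreal K * max (d x z) (d z y)" using qm_basic(3)[OF q] by blast
  have Dsym: "D u v = D v u" for u v unfolding D_def using sym by simp
  have ivd: "infpts dv \<subseteq> {p0}" unfolding dv_def by (rule infpts_involution[OF q t p0])
  have dvreal: "dv u v = ennreal (D u v / (D u p0 * D p0 v))"
    if "u \<notin> infpts d" "u \<noteq> p0" "v \<notin> infpts d" "v \<noteq> p0" "u \<noteq> v" for u v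
    unfolding dv_def D_def by (rule involution_real[OF q t p0 that])
  define A where "A k = {x. x \<notin> infpts d \<and> x \<noteq> p0 \<and> 2 powr (real_of_int k) \<le> D x p0 \<and> D x p0 < 2 powr (real_of_int (k + 1))}" for k :: int
  define Fs where "Fs = {p0} \<union> infpts d"
  have cov: "UNIV \<subseteq> Fs \<union> \<Union>(range A)"
  proof
    fix x :: 'a
    show "x \<in> Fs \<union> \<Union>(range A)"
    proof (cases "x \<in> Fs")
      case False
      then have x: "x \<notin> infpts d" "x \<noteq> p0" unfolding Fs_def by auto
      then have "0 < D x p0" using F(2)[OF x(1) p0] by simp
      then obtain k :: int where "2 powr k \<le> D x p0 \<and> D x p0 < 2 powr (k + 1)" using log_piece by blast
      then have "x \<in> A k" unfolding A_def using x by simp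
      then show ?thesis by blast
    qed simp
  qed
  have HH1: "HH d dv (A k)" for k
  proof (rule HH_lip[OF sym K(1) K(2), of "1 / (2 powr k * 2 powr k)"])
    show "0 < 1 / (2 powr k * 2 powr k)" by simp
    show "\<forall>x\<in>A k. \<forall>y\<in>A k. dv x y \<le> ennreal (1 / (2 powr k * 2 powr k)) * d x y"
    proof (intro ballI)
      fix x y assume x: "x \<in> A k" and y: "y \<in> A k"
      show "dv x y \<le> ennreal (1 / (2 powr k * 2 powr k)) * d x y"
      proof (cases "x = y")
        case True then show ?thesis unfolding dv_def involution_def by simp
      next
        case False
        have xx: "x \<notin> infpts d" "x \<noteq> p0" "2 powr k \<le> D x p0" using x unfolding A_def by auto
        have yy: "y \<notin> infpts d" "y \<noteq> p0" "2 powr k \<le> D y p0" using y unfolding A_def by auto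
        have e: "dv x y = ennreal (D x y / (D x p0 * D p0 y))" by (rule dvreal[OF xx(1,2) yy(1,2) False])
        have nn: "0 \<le> D x y" unfolding D_def by simp
        have le: "2 powr k * 2 powr k \<le> D x p0 * D p0 y"
          using xx(3) yy(3) Dsym[of p0 y] by (intro mult_mono) (auto simp: D_def)
        have pos: "0 < 2 powr k * 2 powr k" by simp
        have P: "0 < D x p0 * D p0 y" using le pos by linarith
        have "D x y / (D x p0 * D p0 y) \<le> D x y / (2 powr k * 2 powr k)"
          by (rule divide_left_mono[OF le nn mult_pos_pos[OF P pos]])
        also have "\<dots> = (1 / (2 powr k * 2 powr k)) * D x y" by simp
        finally have "dv x y \<le> ennreal ((1 / (2 powr k * 2 powr k)) * D x y)" unfolding e by (rule ennreal_leI)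
        also have "\<dots> = ennreal (1 / (2 powr k * 2 powr k)) * d x y"
          using F(1)[OF xx(1) yy(1)] nn by (simp add: ennreal_mult[symmetric])
        finally show ?thesis .
      qed
    qed
  qed
  have HH2: "HH dv d (A k)" for k
  proof -
    define M where "M = K * (2 powr (k + 1) * 2 powr (k + 1))"
    define \<delta>0 where "\<delta>0 = 1 / (4 * K * 2 powr (k + 1))"
    have M: "0 < M" unfolding M_def using K by simp
    have d0: "0 < \<delta>0" unfolding \<delta>0_def using K by simp
    have key: "d c x \<le> ennreal (M * r)" if r: "0 < r" "r \<le> \<delta>0" and x: "x \<in> A k"
      and cx: "dv c x \<le> ennreal r" for c x r
    proof -
      have xx: "x \<notin> infpts d" "x \<noteq> p0" "D x p0 < 2 powr (k + 1)" using x unfolding A_def by auto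
      have vpos: "0 < D x p0" using F(2)[OF xx(1) p0 xx(2)] .
      have Kd: "K * 2 powr (k + 1) * \<delta>0 = 1/4" unfolding \<delta>0_def using K by simp
      show ?thesis
      proof (cases "c = x")
        case True
        have "d x x = 0" using z by blast
        then show ?thesis using True by simp
      next
        case cx1: False
        show ?thesis
        proof (cases "c \<in> infpts d")
          case True
          then have "dv c x = 1 / d p0 x" unfolding dv_def involution_def using cx1 by simp
          also have "\<dots> = ennreal (1 / D x p0)" using F(1)[OF p0 xx(1)] Dsym[of p0 x] vpos
            by (simp add: ennreal_inv_real)
          finally have "1 / D x p0 \<le> r" using cx r by simp
          moreover have "1 / 2 powr (k + 1) < 1 / D x p0" using vpos xx(3)
            by (intro divide_strict_left_mono) auto
          moreover have "\<delta>0 \<le> 1 / 2 powr (k + 1)" unfolding \<delta>0_def using K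
            by (intro divide_left_mono) auto
          ultimately show ?thesis using r by linarith
        next
          case cn: False
          show ?thesis
          proof (cases "c = p0")
            case True
            then have "dv c x = d p0 x / (d p0 p0 * d p0 x)" unfolding dv_def involution_def using cx1 cn xx by simp
            also have "\<dots> = top" using z xx(2) by (simp add: ennreal_divide_eq_top_iff)
            finally have "top \<le> ennreal r" using cx by simp
            then show ?thesis by (simp add: top_unique)
          next
            case cp: False
            define u where "u = D c p0"
            define v where "v = D x p0"
            define w where "w = D c x"
            have vp: "0 < v" using vpos unfolding v_def .
            have vv: "v < 2 powr (k + 1)" using xx(3) unfolding v_def .
            have upos: "0 < u" unfolding u_def using F(2)[OF cn p0 cp] .
            have wpos: "0 < w" unfolding w_def using F(2)[OF cn xx(1) cx1] .
            have "dv c x = ennreal (w / (u * v))"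
              unfolding u_def v_def w_def using dvreal[OF cn cp xx(1) xx(2) cx1] Dsym[of p0 x] by simp
            then have "w / (u * v) \<le> r" using cx r by simp
            then have wle: "w \<le> r * (u * v)" using upos vp by (simp add: field_simps)
            have qq: "d c p0 \<le> ennreal K * max (d c x) (d x p0)" using K(2) by blast
            have ec: "d c p0 = ennreal u" "d c x = ennreal w" "d x p0 = ennreal v"
              unfolding u_def v_def w_def using F(1)[OF cn p0] F(1)[OF cn xx(1)] F(1)[OF xx(1) p0] by simp_all
            show ?thesis
            proof (cases "w \<le> v")
              case True
              then have "max (d c x) (d x p0) = ennreal v" unfolding ec by (intro max_absorb2 ennreal_leI)
              then have "ennreal u \<le> ennreal (K * v)" using qq K vp unfolding ec by (simp add: ennreal_mult)
              then have "u \<le> K * v" using K vp by simp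
              then have "w \<le> r * ((K * v) * v)" using wle r vp upos
                by (meson mult_left_mono mult_right_mono order_trans less_imp_le)
              also have "\<dots> \<le> r * (K * (2 powr (k + 1) * 2 powr (k + 1)))"
                using r K vp vv by (intro mult_left_mono) (auto simp: mult.assoc intro!: mult_mono)
              finally have "w \<le> M * r" unfolding M_def by (simp add: ac_simps)
              then show ?thesis unfolding ec by (rule ennreal_leI)
            next
              case False
              then have "max (d c x) (d x p0) = ennreal w" unfolding ec by (intro max_absorb1 ennreal_leI) simp
              then have "ennreal u \<le> ennreal (K * w)" using qq K wpos unfolding ec by (simp add: ennreal_mult)
              then have "u \<le> K * w" using K wpos by simp
              then have "w \<le> r * ((K * w) * v)" using wle r vp upos
                by (meson mult_left_mono mult_right_mono order_trans less_imp_le)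
              also have "\<dots> < r * ((K * w) * 2 powr (k + 1))"
                using r K wpos vv by (intro mult_strict_left_mono) auto
              finally have "w * 1 < w * (K * 2 powr (k + 1) * r)" by (simp add: ac_simps)
              then have "1 < K * 2 powr (k + 1) * r" using wpos by simp
              moreover have "K * 2 powr (k + 1) * r \<le> K * 2 powr (k + 1) * \<delta>0"
                using r K by (intro mult_left_mono) auto
              ultimately show ?thesis using Kd by simp
            qed
          qed
        qed
      qed
    qed
    have main: "\<forall>c r x y. 0 < r \<and> r \<le> \<delta>0 \<and> x \<in> A k \<and> y \<in> A k \<and> dv c x \<le> ennreal r \<and> dv c y \<le> ennreal r
              \<longrightarrow> d x y \<le> ennreal (K * M * r)"
    proof (intro allI impI)
      fix c r x y
      assume h: "0 < r \<and> r \<le> \<delta>0 \<and> x \<in> A k \<and> y \<in> A k \<and> dv c x \<le> ennreal r \<and> dv c y \<le> ennreal r"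
      have a: "d c x \<le> ennreal (M * r)" using key h by blast
      have b: "d c y \<le> ennreal (M * r)" using key h by blast
      have "d x y \<le> ennreal K * max (d x c) (d c y)" using K(2) by blast
      also have "\<dots> = ennreal K * max (d c x) (d c y)" using sym by metis
      also have "\<dots> \<le> ennreal K * ennreal (M * r)" using a b by (intro mult_left_mono) auto
      also have "\<dots> = ennreal (K * M * r)" using K M h by (simp add: ennreal_mult[symmetric] mult.assoc)
      finally show "d x y \<le> ennreal (K * M * r)" .
    qed
    have "0 < K * M" using K M by simp
    show ?thesis unfolding HH_def
      apply (rule exI[of _ "K * M"])
      apply (rule conjI, rule \<open>0 < K * M\<close>)
      apply (rule exI[of _ \<delta>0])
      using main d0 by simp
  qed
  obtain x0 where x0: "x0 \<notin> infpts d" using qm_notinf[OF q t] by blast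
  obtain x1 where x1: "x1 \<noteq> p0" using three_other[OF t, of p0 p0] by blast
  have x1': "x1 \<notin> infpts dv" using x1 ivd by blast
  have cF: "countable Fs" unfolding Fs_def using qm_infpts_countable[OF q t] by simp
  have "dimH d = dimH dv"
  proof (rule dimH_pieces[where F = Fs and S = "range A", OF x0 x1'])
    show "\<forall>x. d x x = 0" using z by simp
    show "\<forall>x. dv x x = 0" unfolding dv_def involution_def by simp
    show "countable Fs" by (rule cF)
    show "countable (range A)" by simp
    show "UNIV - infpts d \<subseteq> Fs \<union> \<Union>(range A)" using cov by blast
    show "UNIV - infpts dv \<subseteq> Fs \<union> \<Union>(range A)" using cov by blast
    show "\<forall>B\<in>range A. B \<subseteq> UNIV - infpts d \<and> B \<subseteq> UNIV - infpts dv"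
      using ivd unfolding A_def by blast
    show "\<forall>B\<in>range A. HH d dv B \<and> HH dv d B" using HH1 HH2 by blast
  qed
  then show ?thesis unfolding dv_def by simp
qed

lemma admissible_distinct: "distinct [x, y, a, b] \<Longrightarrow> admissible (x, y, a, b)"
  unfolding admissible_def qlist_def by (auto simp: count_list_0_iff)

lemma cross_from_phibar:
  fixes d d' :: "'a \<Rightarrow> 'a \<Rightarrow> ennreal"
  assumes q: "quasi_metric d" and q': "quasi_metric d'" and t: "distinct [x0, y0, z0 :: 'a]"
    and ph: "Phibar (crt_rep d (x, y, a, b)) = Phibar (crt_rep d' (x, y, a, b))"
    and dist: "distinct [x, y, a, b]"
    and ni: "x \<notin> infpts d" "y \<notin> infpts d" "a \<notin> infpts d" "b \<notin> infpts d"
    and ni': "x \<notin> infpts d'" "y \<notin> infpts d'" "a \<notin> infpts d'" "b \<notin> infpts d'"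
  shows "enn2real (d' x y) * enn2real (d' a b) * enn2real (d x a) * enn2real (d y b)
       = enn2real (d x y) * enn2real (d a b) * enn2real (d' x a) * enn2real (d' y b)"
proof -
  note F = part2_facts[OF q t] and F' = part2_facts[OF q' t]
  have sym: "\<forall>x y. d x y = d y x" using qm_basic[OF q] by blast
  have sym': "\<forall>x y. d' x y = d' y x" using qm_basic[OF q'] by blast
  have nt: "d u v \<noteq> \<infinity>" if "u \<notin> infpts d" "v \<notin> infpts d" for u v using qm_infpts(2)[OF q t that] .
  have nt': "d' u v \<noteq> \<infinity>" if "u \<notin> infpts d'" "v \<notin> infpts d'" for u v using qm_infpts(2)[OF q' t that] .
  define D where "D u v = enn2real (d u v)" for u v
  define D' where "D' u v = enn2real (d' u v)" for u v
  have Df: "Dfin d u v = D u v" if "u \<notin> infpts d" "v \<notin> infpts d" for u v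
    unfolding Dfin_def D_def using nt[OF that] by simp
  have Df': "Dfin d' u v = D' u v" if "u \<notin> infpts d'" "v \<notin> infpts d'" for u v
    unfolding Dfin_def D'_def using nt'[OF that] by simp
  have Dp: "0 < D u v" if "u \<notin> infpts d" "v \<notin> infpts d" "u \<noteq> v" for u v
    unfolding D_def using F(2)[OF that] .
  have Dp': "0 < D' u v" if "u \<notin> infpts d'" "v \<notin> infpts d'" "u \<noteq> v" for u v
    unfolding D'_def using F'(2)[OF that] .
  have Ds: "D b y = D y b" unfolding D_def using sym by simp
  have Ds': "D' b y = D' y b" unfolding D'_def using sym' by simp
  have c1: "crt_rep d (x, y, a, b) = (D x y * D a b, D x a * D y b, D x b * D y a)"
    unfolding crt_rep_def using ni Ds by (simp add: Df)
  have c2: "crt_rep d' (x, y, a, b) = (D' x y * D' a b, D' x a * D' y b, D' x b * D' y a)"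
    unfolding crt_rep_def using ni' Ds' by (simp add: Df')
  have dd: "x \<noteq> y" "x \<noteq> a" "x \<noteq> b" "y \<noteq> a" "y \<noteq> b" "a \<noteq> b" using dist by auto
  have p1: "0 < D x y * D a b" "0 < D x a * D y b" "0 < D x b * D y a"
    using Dp ni dd by (auto intro!: mult_pos_pos)
  have p2: "0 < D' x y * D' a b" "0 < D' x a * D' y b" "0 < D' x b * D' y a"
    using Dp' ni' dd by (auto intro!: mult_pos_pos)
  have "ln ((D x y * D a b) / (D x a * D y b)) = ln ((D' x y * D' a b) / (D' x a * D' y b))"
    using ph p1 p2 unfolding c1 c2 Phibar_def by simp
  then have "(D x y * D a b) / (D x a * D y b) = (D' x y * D' a b) / (D' x a * D' y b)"
    using p1 p2 by (simp add: ln_inj_iff)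
  moreover have nz: "D x a * D y b \<noteq> 0" "D' x a * D' y b \<noteq> 0" using p1 p2 by auto
  ultimately have "(D x y * D a b) * (D' x a * D' y b) = (D' x y * D' a b) * (D x a * D y b)"
    by (simp only: frac_eq_eq[OF nz])
  then show ?thesis unfolding D_def[symmetric] D'_def[symmetric] by (simp add: ac_simps)
qed


lemma two_points:
  assumes "infinite (UNIV :: 'a set)" "finite (G :: 'a set)"
  shows "\<exists>a b. a \<noteq> b \<and> a \<notin> G \<and> b \<notin> G"
proof -
  have i1: "infinite (UNIV - G)" using assms by (simp add: Diff_infinite_finite)
  then obtain a where a: "a \<in> UNIV - G" by (metis ex_in_conv finite.emptyI)
  have "infinite (UNIV - G - {a})" using i1 by simp
  then obtain b where b: "b \<in> UNIV - G - {a}" by (metis ex_in_conv finite.emptyI)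
  show ?thesis using a b by blast
qed

lemma qm_infpts_finite:
  fixes d :: "'a \<Rightarrow> 'a \<Rightarrow> ennreal"
  assumes q: "quasi_metric d" and t: "distinct [x, y, z :: 'a]"
  shows "finite (infpts d)"
proof -
  obtain \<omega> where "infpts d \<subseteq> {\<omega>}" using qm_infpts(1)[OF q t] by blast
  then show ?thesis using finite_subset by blast
qed

lemma part3_core:
  fixes d d' :: "'a \<Rightarrow> 'a \<Rightarrow> ennreal"
  assumes q: "quasi_metric d" and q': "quasi_metric d'" and t: "distinct [x0, y0, z0 :: 'a]"
    and ph: "\<forall>x y a b. distinct [x, y, a, b] \<longrightarrow> Phibar (crt_rep d (x, y, a, b)) = Phibar (crt_rep d' (x, y, a, b))"
  shows "dimH d = dimH d'"
proof -
  note F = part2_facts[OF q t] and F' = part2_facts[OF q' t]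
  have sym: "\<forall>x y. d x y = d y x" and z: "\<forall>x y. d x y = 0 \<longleftrightarrow> x = y" using qm_basic[OF q] by blast+
  have sym': "\<forall>x y. d' x y = d' y x" and z': "\<forall>x y. d' x y = 0 \<longleftrightarrow> x = y" using qm_basic[OF q'] by blast+
  obtain K where K: "K \<ge> 1" "\<forall>x y z. d x y \<le> ennreal K * max (d x z) (d z y)" using qm_basic(3)[OF q] by blast
  obtain K' where K': "K' \<ge> 1" "\<forall>x y z. d' x y \<le> ennreal K' * max (d' x z) (d' z y)" using qm_basic(3)[OF q'] by blast
  obtain x0 where x0: "x0 \<notin> infpts d" using qm_notinf[OF q t] by blast
  obtain x1 where x1: "x1 \<notin> infpts d'" using qm_notinf[OF q' t] by blast
  have zz: "\<forall>x. d x x = 0" "\<forall>x. d' x x = 0" using z z' by blast+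
  have finG: "finite (infpts d \<union> infpts d')" using qm_infpts_finite[OF q t] qm_infpts_finite[OF q' t] by simp
  show ?thesis
  proof (cases "finite (UNIV :: 'a set)")
    case True
    show ?thesis
      by (rule dimH_pieces[where F = UNIV and S = "{}", OF x0 x1 zz]) (use True countable_finite in auto)
  next
    case False
    obtain a b where ab: "a \<noteq> b" "a \<notin> infpts d \<union> infpts d'" "b \<notin> infpts d \<union> infpts d'"
      using two_points[OF False finG] by blast
    define D where "D u v = enn2real (d u v)" for u v
    define D' where "D' u v = enn2real (d' u v)" for u v
    define \<rho> where "\<rho> u v = D' u v / D u v" for u v
    define R where "R = \<rho> a b"
    have Dp: "0 < D u v" if "u \<notin> infpts d" "v \<notin> infpts d" "u \<noteq> v" for u v
      unfolding D_def using F(2)[OF that] .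
    have Dp': "0 < D' u v" if "u \<notin> infpts d'" "v \<notin> infpts d'" "u \<noteq> v" for u v
      unfolding D'_def using F'(2)[OF that] .
    have \<rho>p: "0 < \<rho> u v" if "u \<notin> infpts d \<union> infpts d'" "v \<notin> infpts d \<union> infpts d'" "u \<noteq> v" for u v
      unfolding \<rho>_def using Dp Dp' that by simp
    have Rp: "0 < R" unfolding R_def using \<rho>p ab by blast
    define A where "A p = {x. x \<notin> infpts d \<and> x \<notin> infpts d' \<and> x \<noteq> a \<and> x \<noteq> b \<and>
        2 powr (real_of_int (fst p)) \<le> \<rho> x a \<and> \<rho> x a < 2 powr (real_of_int (fst p + 1)) \<and>
        2 powr (real_of_int (snd p)) \<le> \<rho> x b \<and> \<rho> x b < 2 powr (real_of_int (snd p + 1))}" for p :: "int \<times> int"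
    define Fs where "Fs = {a, b} \<union> infpts d \<union> infpts d'"
    have cov: "UNIV \<subseteq> Fs \<union> \<Union>(range A)"
    proof
      fix x :: 'a
      show "x \<in> Fs \<union> \<Union>(range A)"
      proof (cases "x \<in> Fs")
        case False
        then have x: "x \<notin> infpts d \<union> infpts d'" "x \<noteq> a" "x \<noteq> b" unfolding Fs_def by auto
        obtain i :: int where i: "2 powr i \<le> \<rho> x a \<and> \<rho> x a < 2 powr (i + 1)"
          using log_piece[OF \<rho>p[OF x(1) ab(2) x(2)]] by blast
        obtain j :: int where j: "2 powr j \<le> \<rho> x b \<and> \<rho> x b < 2 powr (j + 1)"
          using log_piece[OF \<rho>p[OF x(1) ab(3) x(3)]] by blast
        have "x \<in> A (i, j)" unfolding A_def using x i j by simp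
        then show ?thesis by blast
      qed simp
    qed
    have ident: "D' x y * R = D x y * (\<rho> x a * \<rho> y b)" if x: "x \<in> A p" and y: "y \<in> A p" and xy: "x \<noteq> y" for x y p
    proof -
      have xx: "x \<notin> infpts d" "x \<notin> infpts d'" "x \<noteq> a" "x \<noteq> b" using x unfolding A_def by auto
      have yy: "y \<notin> infpts d" "y \<notin> infpts d'" "y \<noteq> a" "y \<noteq> b" using y unfolding A_def by auto
      have dist: "distinct [x, y, a, b]" using xx yy xy ab by auto
      have cr: "D' x y * D' a b * D x a * D y b = D x y * D a b * D' x a * D' y b"
        unfolding D_def D'_def
        by (rule cross_from_phibar[OF q q' t ph[rule_format, OF dist] dist]) (use xx yy ab in auto)
      have p: "0 < D a b" "0 < D x a" "0 < D y b"
        using Dp xx yy ab by auto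
      have "D' x y * R * (D a b * D x a * D y b) = D x y * (\<rho> x a * \<rho> y b) * (D a b * D x a * D y b)"
        using cr p unfolding R_def \<rho>_def by (simp add: field_simps)
      then show ?thesis using p by simp
    qed
    have HH1: "HH d d' (A p)" and HH2: "HH d' d (A p)" for p
    proof -
      obtain i j where p: "p = (i, j)" by (cases p)
      define C1 where "C1 = 2 powr (i + 1) * 2 powr (j + 1) / R"
      define C2 where "C2 = R / (2 powr i * 2 powr j)"
      have le1: "d' x y \<le> ennreal C1 * d x y" and le2: "d x y \<le> ennreal C2 * d' x y" if x: "x \<in> A p" and y: "y \<in> A p" for x y
      proof -
        have xx: "x \<notin> infpts d" "x \<notin> infpts d'" "2 powr i \<le> \<rho> x a" "\<rho> x a < 2 powr (i + 1)"
          using x unfolding A_def p by auto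
        have yy: "y \<notin> infpts d" "y \<notin> infpts d'" "2 powr j \<le> \<rho> y b" "\<rho> y b < 2 powr (j + 1)"
          using y unfolding A_def p by auto
        have "d' x y \<le> ennreal C1 * d x y \<and> d x y \<le> ennreal C2 * d' x y"
        proof (cases "x = y")
          case True then show ?thesis using zz by simp
        next
          case False
          have id: "D' x y * R = D x y * (\<rho> x a * \<rho> y b)" by (rule ident[OF x y False])
          have nn: "0 \<le> D x y" "0 \<le> D' x y" unfolding D_def D'_def by simp_all
          have ry: "0 \<le> \<rho> y b" using yy(3) powr_ge_zero[of 2 "real_of_int j"] by linarith
          have P1: "\<rho> x a * \<rho> y b \<le> 2 powr (i + 1) * 2 powr (j + 1)"
            using xx yy ry by (intro mult_mono) auto
          have rx: "0 \<le> \<rho> x a" using xx(3) powr_ge_zero[of 2 "real_of_int i"] by linarith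
          have P2: "2 powr i * 2 powr j \<le> \<rho> x a * \<rho> y b"
            using xx yy rx by (intro mult_mono) auto
          have pos: "0 < 2 powr i * 2 powr j" by simp
          have "D' x y = D x y * (\<rho> x a * \<rho> y b) / R" using id Rp by (simp add: field_simps)
          also have "\<dots> \<le> D x y * (2 powr (i + 1) * 2 powr (j + 1)) / R"
            using P1 nn Rp by (intro divide_right_mono mult_left_mono) auto
          also have "\<dots> = C1 * D x y" unfolding C1_def by simp
          finally have r1: "D' x y \<le> C1 * D x y" .
          have "D x y * (2 powr i * 2 powr j) \<le> D x y * (\<rho> x a * \<rho> y b)"
            using P2 nn by (intro mult_left_mono) auto
          also have "\<dots> = D' x y * R" using id by simp
          finally have "D x y \<le> D' x y * R / (2 powr i * 2 powr j)" using pos by (simp add: field_simps)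
          also have "\<dots> = C2 * D' x y" unfolding C2_def by simp
          finally have r2: "D x y \<le> C2 * D' x y" .
          have C1p: "0 \<le> C1" unfolding C1_def using Rp by simp
          have C2p: "0 \<le> C2" unfolding C2_def using Rp by simp
          have e1: "d x y = ennreal (D x y)" unfolding D_def using F(1)[OF xx(1) yy(1)] .
          have e2: "d' x y = ennreal (D' x y)" unfolding D'_def using F'(1)[OF xx(2) yy(2)] .
          show ?thesis unfolding e1 e2 using r1 r2 C1p C2p nn
            by (simp add: ennreal_mult[symmetric] ennreal_leI)
        qed
        then show "d' x y \<le> ennreal C1 * d x y" "d x y \<le> ennreal C2 * d' x y" by blast+
      qed
      have C1p: "0 < C1" unfolding C1_def using Rp by simp
      have C2p: "0 < C2" unfolding C2_def using Rp by simp
      show "HH d d' (A p)" using le1 by (intro HH_lip[OF sym K(1) K(2) C1p]) blast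
      show "HH d' d (A p)" using le2 by (intro HH_lip[OF sym' K'(1) K'(2) C2p]) blast
    qed
    have cF: "countable Fs" unfolding Fs_def using finG by (simp add: countable_finite)
    show ?thesis
    proof (rule dimH_pieces[where F = Fs and S = "range A", OF x0 x1 zz cF])
      show "countable (range A)" by simp
      show "UNIV - infpts d \<subseteq> Fs \<union> \<Union>(range A)" using cov by blast
      show "UNIV - infpts d' \<subseteq> Fs \<union> \<Union>(range A)" using cov by blast
      show "\<forall>B\<in>range A. B \<subseteq> UNIV - infpts d \<and> B \<subseteq> UNIV - infpts d'"
        unfolding A_def by blast
      show "\<forall>B\<in>range A. HH d d' B \<and> HH d' d B" using HH1 HH2 by blast
    qed
  qed
qed

lemma Zc_comp1:
  assumes "surj f" "Zc d' s B"
  shows "Zc (\<lambda>x y. d' (f x) (f y)) s (f -` B)"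
  unfolding Zc_def
proof (intro allI impI)
  fix \<delta> \<epsilon> :: real assume "0 < \<delta>" "0 < \<epsilon>"
  obtain I c r where r: "\<forall>i\<in>I. 0 < r i \<and> r i \<le> \<delta>"
    and cov: "B \<subseteq> (\<Union>i\<in>I. cball_d d' (c i) (r i))"
    and sm: "(\<Sum>i. if i \<in> (I::nat set) then ennreal ((r i :: real) powr s) else 0) < ennreal \<epsilon>"
    using assms(2)[unfolded Zc_def, rule_format, OF \<open>0 < \<delta>\<close> \<open>0 < \<epsilon>\<close>] by blast
  have cov': "f -` B \<subseteq> (\<Union>i\<in>I. cball_d (\<lambda>x y. d' (f x) (f y)) (inv f (c i)) (r i))"
  proof
    fix x assume "x \<in> f -` B"
    then have "f x \<in> B" by simp
    then obtain i where i: "i \<in> I" "d' (c i) (f x) \<le> ennreal (r i)" using cov unfolding cball_d_def by blast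
    have "f (inv f (c i)) = c i" by (rule surj_f_inv_f[OF assms(1)])
    then have "x \<in> cball_d (\<lambda>x y. d' (f x) (f y)) (inv f (c i)) (r i)" unfolding cball_d_def using i(2) by simp
    then show "x \<in> (\<Union>i\<in>I. cball_d (\<lambda>x y. d' (f x) (f y)) (inv f (c i)) (r i))" using i(1) by blast
  qed
  show "\<exists>I c r. (\<forall>i\<in>I. 0 < r i \<and> r i \<le> \<delta>) \<and> f -` B \<subseteq> (\<Union>i\<in>I. cball_d (\<lambda>x y. d' (f x) (f y)) (c i) (r i)) \<and>
      (\<Sum>i. if i \<in> (I::nat set) then ennreal ((r i :: real) powr s) else 0) < ennreal \<epsilon>"
    apply (rule exI[of _ I], rule exI[of _ "\<lambda>i. inv f (c i)"], rule exI[of _ r])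
    by (intro conjI r cov' sm)
qed

lemma Zc_comp2:
  assumes "Zc (\<lambda>x y. d' (f x) (f y)) s A"
  shows "Zc d' s (f ` A)"
  unfolding Zc_def
proof (intro allI impI)
  fix \<delta> \<epsilon> :: real assume "0 < \<delta>" "0 < \<epsilon>"
  obtain I c r where r: "\<forall>i\<in>I. 0 < r i \<and> r i \<le> \<delta>"
    and cov: "A \<subseteq> (\<Union>i\<in>I. cball_d (\<lambda>x y. d' (f x) (f y)) (c i) (r i))"
    and sm: "(\<Sum>i. if i \<in> (I::nat set) then ennreal ((r i :: real) powr s) else 0) < ennreal \<epsilon>"
    using assms[unfolded Zc_def, rule_format, OF \<open>0 < \<delta>\<close> \<open>0 < \<epsilon>\<close>] by blast
  have cov': "f ` A \<subseteq> (\<Union>i\<in>I. cball_d d' (f (c i)) (r i))"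
  proof
    fix y assume "y \<in> f ` A"
    then obtain x where x: "x \<in> A" "y = f x" by blast
    then obtain i where i: "i \<in> I" "d' (f (c i)) (f x) \<le> ennreal (r i)" using cov unfolding cball_d_def by blast
    then show "y \<in> (\<Union>i\<in>I. cball_d d' (f (c i)) (r i))" unfolding cball_d_def using x(2) by blast
  qed
  show "\<exists>I c r. (\<forall>i\<in>I. 0 < r i \<and> r i \<le> \<delta>) \<and> f ` A \<subseteq> (\<Union>i\<in>I. cball_d d' (c i) (r i)) \<and>
      (\<Sum>i. if i \<in> (I::nat set) then ennreal ((r i :: real) powr s) else 0) < ennreal \<epsilon>"
    apply (rule exI[of _ I], rule exI[of _ "\<lambda>i. f (c i)"], rule exI[of _ r])
    by (intro conjI r cov' sm)
qed

lemma infpts_comp: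
  assumes "bij f"
  shows "infpts (\<lambda>x y. d' (f x) (f y)) = f -` infpts d'"
proof -
  have "(\<forall>x. x \<noteq> p \<longrightarrow> d' (f x) (f p) = \<infinity>) \<longleftrightarrow> (\<forall>u. u \<noteq> f p \<longrightarrow> d' u (f p) = \<infinity>)" for p
  proof
    assume h: "\<forall>x. x \<noteq> p \<longrightarrow> d' (f x) (f p) = \<infinity>"
    show "\<forall>u. u \<noteq> f p \<longrightarrow> d' u (f p) = \<infinity>"
    proof (intro allI impI)
      fix u assume "u \<noteq> f p"
      obtain x where "u = f x" using bij_is_surj[OF assms] by (metis surj_f_inv_f)
      then show "d' u (f p) = \<infinity>" using h \<open>u \<noteq> f p\<close> by (cases "x = p") auto
    qed
  next
    assume h: "\<forall>u. u \<noteq> f p \<longrightarrow> d' u (f p) = \<infinity>"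
    show "\<forall>x. x \<noteq> p \<longrightarrow> d' (f x) (f p) = \<infinity>"
      using h bij_is_inj[OF assms] by (metis injD)
  qed
  then show ?thesis unfolding infpts_def by auto
qed

lemma dimH_comp:
  assumes "bij f"
  shows "dimH (\<lambda>x y. d' (f x) (f y)) = dimH d'"
proof -
  have s: "surj f" using bij_is_surj[OF assms] .
  have eqv: "f -` (UNIV - infpts d') = UNIV - infpts (\<lambda>x y. d' (f x) (f y))"
    using infpts_comp[OF assms, of d'] by auto
  have "haus_meas (\<lambda>x y. d' (f x) (f y)) s' UNIV = 0 \<longleftrightarrow> haus_meas d' s' UNIV = 0" for s'
    unfolding haus_meas_zero_iff
  proof
    assume "Zc (\<lambda>x y. d' (f x) (f y)) s' (UNIV - infpts (\<lambda>x y. d' (f x) (f y)))"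
    then have "Zc d' s' (f ` (f -` (UNIV - infpts d')))" unfolding eqv[symmetric] by (rule Zc_comp2)
    moreover have "f ` (f -` (UNIV - infpts d')) = UNIV - infpts d'" using s by (simp add: surj_image_vimage_eq)
    ultimately show "Zc d' s' (UNIV - infpts d')" by simp
  next
    assume "Zc d' s' (UNIV - infpts d')"
    then show "Zc (\<lambda>x y. d' (f x) (f y)) s' (UNIV - infpts (\<lambda>x y. d' (f x) (f y)))"
      unfolding eqv[symmetric] by (rule Zc_comp1[OF s])
  qed
  then show ?thesis unfolding dimH_def by simp
qed

lemma ex1_bij:
  assumes "bij f" shows "(\<exists>!x. Q (f x)) \<longleftrightarrow> (\<exists>!y. Q y)"
proof
  assume "\<exists>!x. Q (f x)"
  then obtain x where x: "Q (f x)" "\<And>x'. Q (f x') \<Longrightarrow> x' = x" by blast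
  show "\<exists>!y. Q y"
  proof (rule ex1I[of _ "f x"])
    show "Q (f x)" by (rule x(1))
    fix y assume "Q y"
    then have "Q (f (inv f y))" using bij_inv_eq_iff[OF assms] by metis
    then have "inv f y = x" by (rule x(2))
    then show "y = f x" using bij_inv_eq_iff[OF assms] by metis
  qed
next
  assume "\<exists>!y. Q y"
  then obtain y where y: "Q y" "\<And>y'. Q y' \<Longrightarrow> y' = y" by blast
  show "\<exists>!x. Q (f x)"
  proof (rule ex1I[of _ "inv f y"])
    show "Q (f (inv f y))" using y(1) bij_inv_eq_iff[OF assms] by metis
    fix x assume "Q (f x)"
    then have "f x = y" by (rule y(2))
    then show "x = inv f y" using bij_inv_eq_iff[OF assms] by metis
  qed
qed

lemma qm_comp:
  assumes "bij f" "quasi_metric d'"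
  shows "quasi_metric (\<lambda>x y. d' (f x) (f y))"
proof -
  have inj: "inj f" using bij_is_inj[OF assms(1)] .
  have o: "semi_metric d' \<or> ext_semi_metric d'"
    using assms(2) unfolding quasi_metric_def by (elim conjE)
  have k: "\<exists>K\<ge>1. \<forall>x y z. d' x y \<le> ennreal K * max (d' x z) (d' z y)"
    using assms(2) unfolding quasi_metric_def by (elim conjE)
  have sym: "\<forall>x y. d' x y = d' y x" and z: "\<forall>x y. d' x y = 0 \<longleftrightarrow> x = y" using qm_basic[OF assms(2)] by blast+
  have sym2: "\<forall>x y. d' (f x) (f y) = d' (f y) (f x)" using sym by blast
  have z2: "\<forall>x y. d' (f x) (f y) = 0 \<longleftrightarrow> x = y" using z inj by (simp add: inj_eq)
  have k2: "\<exists>K\<ge>1. \<forall>x y z. d' (f x) (f y) \<le> ennreal K * max (d' (f x) (f z)) (d' (f z) (f y))"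
    using k by blast
  have "semi_metric (\<lambda>x y. d' (f x) (f y)) \<or> ext_semi_metric (\<lambda>x y. d' (f x) (f y))"
    using o
  proof
    assume "semi_metric d'"
    then have "\<forall>x y. d' x y \<noteq> \<infinity>" unfolding semi_metric_def by (elim conjE)
    then have "semi_metric (\<lambda>x y. d' (f x) (f y))" unfolding semi_metric_def using sym2 z2 by blast
    then show ?thesis ..
  next
    assume "ext_semi_metric d'"
    then have e: "\<exists>!p. (\<forall>x. x \<noteq> p \<longrightarrow> d' x p = \<infinity>) \<and> (\<forall>x y. x \<noteq> p \<longrightarrow> y \<noteq> p \<longrightarrow> d' x y \<noteq> \<infinity>)"
      unfolding ext_semi_metric_def by (elim conjE)
    define Q where "Q p \<longleftrightarrow> (\<forall>x. x \<noteq> p \<longrightarrow> d' x p = \<infinity>) \<and> (\<forall>x y. x \<noteq> p \<longrightarrow> y \<noteq> p \<longrightarrow> d' x y \<noteq> \<infinity>)" for p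
    have QQ: "Q (f p) \<longleftrightarrow> (\<forall>x. x \<noteq> p \<longrightarrow> d' (f x) (f p) = \<infinity>) \<and> (\<forall>x y. x \<noteq> p \<longrightarrow> y \<noteq> p \<longrightarrow> d' (f x) (f y) \<noteq> \<infinity>)" for p
    proof -
      have sj: "\<And>u. u = f (inv f u)" using bij_inv_eq_iff[OF assms(1)] by metis
      have a: "(\<forall>x. x \<noteq> f p \<longrightarrow> d' x (f p) = \<infinity>) \<longleftrightarrow> (\<forall>x. x \<noteq> p \<longrightarrow> d' (f x) (f p) = \<infinity>)"
        by (metis sj inj_eq[OF inj])
      have b: "(\<forall>x y. x \<noteq> f p \<longrightarrow> y \<noteq> f p \<longrightarrow> d' x y \<noteq> \<infinity>) \<longleftrightarrow> (\<forall>x y. x \<noteq> p \<longrightarrow> y \<noteq> p \<longrightarrow> d' (f x) (f y) \<noteq> \<infinity>)"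
        by (metis sj inj_eq[OF inj])
      show ?thesis unfolding Q_def using a b by simp
    qed
    have "\<exists>!p. Q p" using e unfolding Q_def .
    then have "\<exists>!p. Q (f p)" using ex1_bij[OF assms(1), of Q] by simp
    then have "\<exists>!p. (\<forall>x. x \<noteq> p \<longrightarrow> d' (f x) (f p) = \<infinity>) \<and> (\<forall>x y. x \<noteq> p \<longrightarrow> y \<noteq> p \<longrightarrow> d' (f x) (f y) \<noteq> \<infinity>)"
      unfolding QQ .
    then have "ext_semi_metric (\<lambda>x y. d' (f x) (f y))" unfolding ext_semi_metric_def using sym2 z2 by blast
    then show ?thesis ..
  qed
  then show ?thesis unfolding quasi_metric_def using k2 by blast
qed

theorem theorem1p1:
  fixes M :: "'a quad \<Rightarrow> triple" and d :: "'a \<Rightarrow> 'a \<Rightarrow> ennreal"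
  assumes "\<exists>x y z :: 'a. distinct [x, y, z]"
    and "moebius_space M"
    and "quasi_metric d"
    and "induces d M"
  shows "(\<forall>l::real. l > 0 \<longrightarrow> dimH (\<lambda>x y. ennreal l * d x y) = dimH d)
       \<and> (\<forall>p0. p0 \<notin> infpts d \<longrightarrow> dimH (involution d p0) = dimH d)
       \<and> (\<forall>d'. quasi_metric d' \<and> induces d' M \<longrightarrow> dimH d' = dimH d)
       \<and> (\<forall>(M' :: 'b quad \<Rightarrow> triple) (f :: 'a \<Rightarrow> 'b) (d' :: 'b \<Rightarrow> 'b \<Rightarrow> ennreal).
            (\<exists>x y z :: 'b. distinct [x, y, z]) \<and> moebius_space M' \<and> moebius_equiv f M M'
            \<and> quasi_metric d' \<and> induces d' M' \<longrightarrow> dimH d' = dimH d)"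
proof -
  obtain x y z :: 'a where t: "distinct [x, y, z]" using assms(1) by blast
  note q = assms(3)
  have c1: "\<forall>l::real. l > 0 \<longrightarrow> dimH (\<lambda>x y. ennreal l * d x y) = dimH d"
    using part1[OF q t] by blast
  have c2: "\<forall>p0. p0 \<notin> infpts d \<longrightarrow> dimH (involution d p0) = dimH d"
    using part2[OF q t] by blast
  have c3: "\<forall>d'. quasi_metric d' \<and> induces d' M \<longrightarrow> dimH d' = dimH d"
  proof (intro allI impI)
    fix d' :: "'a \<Rightarrow> 'a \<Rightarrow> ennreal" assume h: "quasi_metric d' \<and> induces d' M"
    have ph: "\<forall>x y a b. distinct [x, y, a, b] \<longrightarrow> Phibar (crt_rep d (x, y, a, b)) = Phibar (crt_rep d' (x, y, a, b))"
    proof (intro allI impI)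
      fix x y a b :: 'a assume "distinct [x, y, a, b]"
      then have adm: "admissible (x, y, a, b)" by (rule admissible_distinct)
      have "M (x, y, a, b) = Phibar (crt_rep d (x, y, a, b))" using assms(4) adm unfolding induces_def by blast
      moreover have "M (x, y, a, b) = Phibar (crt_rep d' (x, y, a, b))" using h adm unfolding induces_def by blast
      ultimately show "Phibar (crt_rep d (x, y, a, b)) = Phibar (crt_rep d' (x, y, a, b))" by simp
    qed
    have "dimH d = dimH d'" using h ph part3_core[OF q _ t] by blast
    then show "dimH d' = dimH d" by simp
  qed
  have c4: "\<forall>(M' :: 'b quad \<Rightarrow> triple) (f :: 'a \<Rightarrow> 'b) (d' :: 'b \<Rightarrow> 'b \<Rightarrow> ennreal).
            (\<exists>x y z :: 'b. distinct [x, y, z]) \<and> moebius_space M' \<and> moebius_equiv f M M'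
            \<and> quasi_metric d' \<and> induces d' M' \<longrightarrow> dimH d' = dimH d"
  proof (intro allI impI)
    fix M' :: "'b quad \<Rightarrow> triple" and f :: "'a \<Rightarrow> 'b" and d' :: "'b \<Rightarrow> 'b \<Rightarrow> ennreal"
    assume h: "(\<exists>x y z :: 'b. distinct [x, y, z]) \<and> moebius_space M' \<and> moebius_equiv f M M'
            \<and> quasi_metric d' \<and> induces d' M'"
    have bij: "bij f" and eqv: "\<forall>P. admissible P \<longrightarrow> M' (map_quad f P) = M P"
      using h unfolding moebius_equiv_def by blast+
    have q': "quasi_metric d'" and ind': "induces d' M'" using h by blast+
    have inj: "inj f" using bij_is_inj[OF bij] .
    define d2 where "d2 = (\<lambda>x y. d' (f x) (f y))"
    have q2: "quasi_metric d2" unfolding d2_def by (rule qm_comp[OF bij q'])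
    have ph: "\<forall>x y a b. distinct [x, y, a, b] \<longrightarrow> Phibar (crt_rep d (x, y, a, b)) = Phibar (crt_rep d2 (x, y, a, b))"
    proof (intro allI impI)
      fix x y a b :: 'a assume dist: "distinct [x, y, a, b]"
      then have adm: "admissible (x, y, a, b)" by (rule admissible_distinct)
      have dist2: "distinct [f x, f y, f a, f b]" using dist inj by (auto simp: inj_eq)
      then have adm2: "admissible (f x, f y, f a, f b)" by (rule admissible_distinct)
      have mq: "map_quad f (x, y, a, b) = (f x, f y, f a, f b)" unfolding map_quad_def by simp
      have "Phibar (crt_rep d (x, y, a, b)) = M (x, y, a, b)" using assms(4) adm unfolding induces_def by simp
      also have "\<dots> = M' (f x, f y, f a, f b)" using eqv[rule_format, OF adm] unfolding mq by simp
      also have "\<dots> = Phibar (crt_rep d' (f x, f y, f a, f b))" using ind' adm2 unfolding induces_def by simp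
      also have "\<dots> = Phibar (crt_rep d2 (x, y, a, b))" unfolding crt_rep_def Dfin_def d2_def by simp
      finally show "Phibar (crt_rep d (x, y, a, b)) = Phibar (crt_rep d2 (x, y, a, b))" .
    qed
    have "dimH d = dimH d2" by (rule part3_core[OF q q2 t ph])
    also have "\<dots> = dimH d'" unfolding d2_def by (rule dimH_comp[OF bij])
    finally show "dimH d' = dimH d" by simp
  qed
  show ?thesis using c1 c2 c3 c4 by blast
qed

end
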